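(* For $n\ge2$ and $u_1,\dots,u_n\in\mathcal B$, the Boolean cumulant satisfies $B_n[X(u_1),\dots,X(u_n)]=\sum_{\pi\in\widetilde{\mathrm{NC}}_{ns}(n)}\langle W_M(\pi)\Omega,\Omega\rangle_{\gamma,\phi}$, and for $n=1$ the Boolean cumulant $B_1[X(u_1)]$ is zero.
   Context: Let $\mathcal B$ be a unital $*$-algebra with star-linear maps $\phi:\mathcal B\to\mathbb C$, $\gamma:\mathcal B\to\mathcal B$, $\Lambda:\mathcal B\otimes_{alg}\mathcal B\to\mathcal B$, where $\phi$ is positive and faithful and $\gamma+\phi$ is completely positive, with $(\gamma+\phi)[b]:=\gamma[b]+\phi[b]1_{\mathcal B}$. Assume $\phi[v^*\Lambda(b\otimes u)]=\phi[\Lambda(b^*\otimes v)^*u]$ and $\gamma[v^*\Lambda(b\otimes u)]=\gamma[\Lambda(b^*\otimes v)^*u]$ for all $b,u,v$. On $\mathcal F_{alg}(\mathcal B)=\mathbb C\Omega\oplus\bigoplus_{n\ge1}\mathcal B^{\otimes n}$ use the form $\langle\Omega,\Omega\rangle_{\gamma,\phi}=1$, $\langle u_1\otimes\cdots\otimes u_n,v_1\otimes\cdots\otimes v_k\rangle_{\gamma,\phi}=\delta_{n=k}\phi[v_n^*(\gamma+\phi)[v_{n-1}^*\cdots(\gamma+\phi)[v_1^*u_1]\cdots u_{n-1}]u_n]$. For $b\in\mathcal B$: $a^+(b)\Omega=b$, $a^+(b)(u_1\otimes\cdots\otimes u_n)=b\otimes u_1\otimes\cdots\otimes u_n$; $a^-(b)\Omega=0$,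 $a^-(b)u_1=\phi[bu_1]\Omega$, $a^-(b)(u_1\otimes\cdots\otimes u_n)=(\gamma+\phi)[bu_1]u_2\otimes\cdots\otimes u_n$ ($n\ge2$); $a^0(b)\Omega=0$, $a^0(b)(u_1\otimes\cdots\otimes u_n)=\Lambda(b\otimes u_1)\otimes u_2\otimes\cdots\otimes u_n$; $X(b)=a^+(b)+a^-(b)+a^0(b)$. Boolean cumulants $B_k$ of operators $Y_1,\dots,Y_n$ with respect to the vacuum state $\psi(A)=\langle A\Omega,\Omega\rangle_{\gamma,\phi}$ are the multilinear functionals defined by $\psi[Y_1\cdots Y_n]=\sum_{\pi\in\mathrm{Int}(n)}\prod_{V\in\pi}B_{|V|}[Y_{V(1)},\dots,Y_{V(|V|)}]$, where $\mathrm{Int}(n)$ is the set of interval partitions of $\{1,\dots,n\}$. $\widetilde{\mathrm{NC}}_{ns}(n)$ is the set of noncrossing partitions of $\{1,\dots,n\}$ with no singleton blocks in which $1$ and $n$ lie in the same block. In a block the smallest element is opening, the largest closing, others middle; $W_M(\pi)=a_1(u_1)\cdots a_n(u_n)$ with $a_i=a^-$ (opening), $a^+$ (closing), $a^0$ (middle). *)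

theory Defs
  imports Complex_Main "HOL-Library.Disjoint_Sets"
begin

text \<open>The algebra B is a type 'b of class ring_1 (unital ring), together with a
complex scalar multiplication sc and an involution st.\<close>

definition star_algebra :: "(complex \<Rightarrow> 'b::ring_1 \<Rightarrow> 'b) \<Rightarrow> ('b \<Rightarrow> 'b) \<Rightarrow> bool" where
  "star_algebra sc st \<longleftrightarrow>
     (\<forall>a b x. sc (a + b) x = sc a x + sc b x) \<and>
     (\<forall>a x y. sc a (x + y) = sc a x + sc a y) \<and>
     (\<forall>a b x. sc (a * b) x = sc a (sc b x)) \<and>
     (\<forall>x. sc 1 x = x) \<and>
     (\<forall>a x y. sc a (x * y) = sc a x * y) \<and>
     (\<forall>a x y. sc a (x * y) = x * sc a y) \<and>
     (\<forall>x. st (st x) = x) \<and>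
     (\<forall>x y. st (x + y) = st x + st y) \<and>
     (\<forall>a x. st (sc a x) = sc (cnj a) (st x)) \<and>
     (\<forall>x y. st (x * y) = st y * st x)"

definition star_linear_functional ::
  "(complex \<Rightarrow> 'b::ring_1 \<Rightarrow> 'b) \<Rightarrow> ('b \<Rightarrow> 'b) \<Rightarrow> ('b \<Rightarrow> complex) \<Rightarrow> bool" where
  "star_linear_functional sc st f \<longleftrightarrow>
     (\<forall>x y. f (x + y) = f x + f y) \<and> (\<forall>a x. f (sc a x) = a * f x) \<and>
     (\<forall>x. f (st x) = cnj (f x))"

definition star_linear_map ::
  "(complex \<Rightarrow> 'b::ring_1 \<Rightarrow> 'b) \<Rightarrow> ('b \<Rightarrow> 'b) \<Rightarrow> ('b \<Rightarrow> 'b) \<Rightarrow> bool" where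
  "star_linear_map sc st f \<longleftrightarrow>
     (\<forall>x y. f (x + y) = f x + f y) \<and> (\<forall>a x. f (sc a x) = sc a (f x)) \<and>
     (\<forall>x. f (st x) = st (f x))"

text \<open>A linear map on the algebraic tensor product B \<otimes> B is the same as a bilinear
map B \<times> B \<rightarrow> B; it is star-linear for the involution (b \<otimes> u)* = b* \<otimes> u*.\<close>

definition star_bilinear_map ::
  "(complex \<Rightarrow> 'b::ring_1 \<Rightarrow> 'b) \<Rightarrow> ('b \<Rightarrow> 'b) \<Rightarrow> ('b \<Rightarrow> 'b \<Rightarrow> 'b) \<Rightarrow> bool" where
  "star_bilinear_map sc st L \<longleftrightarrow>
     (\<forall>x y u. L (x + y) u = L x u + L y u) \<and> (\<forall>a x u. L (sc a x) u = sc a (L x u)) \<and>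
     (\<forall>x u v. L x (u + v) = L x u + L x v) \<and> (\<forall>a x u. L x (sc a u) = sc a (L x u)) \<and>
     (\<forall>x u. L (st x) (st u) = st (L x u))"

definition positive_functional :: "('b::ring_1 \<Rightarrow> 'b) \<Rightarrow> ('b \<Rightarrow> complex) \<Rightarrow> bool" where
  "positive_functional st f \<longleftrightarrow> (\<forall>b. f (st b * b) \<in> \<real> \<and> Re (f (st b * b)) \<ge> 0)"

definition faithful_functional :: "('b::ring_1 \<Rightarrow> 'b) \<Rightarrow> ('b \<Rightarrow> complex) \<Rightarrow> bool" where
  "faithful_functional st f \<longleftrightarrow> (\<forall>b. f (st b * b) = 0 \<longrightarrow> b = 0)"

definition mat_pos :: "('b::ring_1 \<Rightarrow> 'b) \<Rightarrow> nat \<Rightarrow> (nat \<Rightarrow> nat \<Rightarrow> 'b) \<Rightarrow> bool" where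
  "mat_pos st n M \<longleftrightarrow> (\<exists>As :: (nat \<Rightarrow> nat \<Rightarrow> 'b) list.
      \<forall>i<n. \<forall>j<n. M i j = (\<Sum>A\<leftarrow>As. \<Sum>k<n. st (A k i) * A k j))"

definition completely_positive :: "('b::ring_1 \<Rightarrow> 'b) \<Rightarrow> ('b \<Rightarrow> 'b) \<Rightarrow> bool" where
  "completely_positive st T \<longleftrightarrow>
     (\<forall>n M. mat_pos st n M \<longrightarrow> mat_pos st n (\<lambda>i j. T (M i j)))"

definition gp :: "(complex \<Rightarrow> 'b::ring_1 \<Rightarrow> 'b) \<Rightarrow> ('b \<Rightarrow> 'b) \<Rightarrow> ('b \<Rightarrow> complex) \<Rightarrow> 'b \<Rightarrow> 'b" where
  "gp sc gam phi b = gam b + sc (phi b) 1"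

text \<open>A vector of F_alg(B) is represented as a formal finite linear combination of
elementary tensors u_1 \<otimes> ... \<otimes> u_n, encoded as words (lists); the empty word is \<Omega>.\<close>

type_synonym 'b fvec = "(complex \<times> 'b list) list"
type_synonym 'b fop = "'b list \<Rightarrow> 'b fvec"

definition vac :: "'b fvec" where "vac = [(1, [])]"

fun ip_aux :: "(complex \<Rightarrow> 'b::ring_1 \<Rightarrow> 'b) \<Rightarrow> ('b \<Rightarrow> 'b) \<Rightarrow> ('b \<Rightarrow> 'b) \<Rightarrow> ('b \<Rightarrow> complex)
      \<Rightarrow> 'b \<Rightarrow> 'b list \<Rightarrow> 'b list \<Rightarrow> complex" where
  "ip_aux sc st gam phi a (u # us) (v # vs) = ip_aux sc st gam phi (st v * gp sc gam phi a * u) us vs"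
| "ip_aux sc st gam phi a [] [] = phi a"
| "ip_aux sc st gam phi a _ _ = 0"

text \<open>Form on elementary tensors:
 <u_1..u_n, v_1..v_k> = delta_{n=k} phi[v_n* (g+phi)[v_{n-1}* ... (g+phi)[v_1* u_1] ... u_{n-1}] u_n]\<close>

fun ipw :: "(complex \<Rightarrow> 'b::ring_1 \<Rightarrow> 'b) \<Rightarrow> ('b \<Rightarrow> 'b) \<Rightarrow> ('b \<Rightarrow> 'b) \<Rightarrow> ('b \<Rightarrow> complex)
      \<Rightarrow> 'b list \<Rightarrow> 'b list \<Rightarrow> complex" where
  "ipw sc st gam phi [] [] = 1"
| "ipw sc st gam phi (u # us) (v # vs) = ip_aux sc st gam phi (st v * u) us vs"
| "ipw sc st gam phi _ _ = 0"

definition fock_ip :: "(complex \<Rightarrow> 'b::ring_1 \<Rightarrow> 'b) \<Rightarrow> ('b \<Rightarrow> 'b) \<Rightarrow> ('b \<Rightarrow> 'b) \<Rightarrow> ('b \<Rightarrow> complex)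
      \<Rightarrow> 'b fvec \<Rightarrow> 'b fvec \<Rightarrow> complex" where
  "fock_ip sc st gam phi v w =
     (\<Sum>p\<leftarrow>v. \<Sum>q\<leftarrow>w. fst p * cnj (fst q) * ipw sc st gam phi (snd p) (snd q))"

text \<open>An operator is given by its action on elementary tensors, extended linearly.\<close>

definition op_apply :: "'b fop \<Rightarrow> 'b fvec \<Rightarrow> 'b fvec" where
  "op_apply Y v = concat (map (\<lambda>p. map (\<lambda>q. (fst p * fst q, snd q)) (Y (snd p))) v)"

fun ops_apply :: "'b fop list \<Rightarrow> 'b fvec \<Rightarrow> 'b fvec" where
  "ops_apply [] v = v"
| "ops_apply (Y # Ys) v = op_apply Y (ops_apply Ys v)"

definition vacuum_state :: "(complex \<Rightarrow> 'b::ring_1 \<Rightarrow> 'b) \<Rightarrow> ('b \<Rightarrow> 'b) \<Rightarrow> ('b \<Rightarrow> 'b) \<Rightarrow> ('b \<Rightarrow> complex)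
      \<Rightarrow> 'b fop list \<Rightarrow> complex" where
  "vacuum_state sc st gam phi Ys = fock_ip sc st gam phi (ops_apply Ys vac) vac"

definition a_plus :: "'b \<Rightarrow> 'b fop" where
  "a_plus b w = [(1, b # w)]"

fun a_minus :: "(complex \<Rightarrow> 'b::ring_1 \<Rightarrow> 'b) \<Rightarrow> ('b \<Rightarrow> 'b) \<Rightarrow> ('b \<Rightarrow> complex) \<Rightarrow> 'b \<Rightarrow> 'b fop" where
  "a_minus sc gam phi b [] = []"
| "a_minus sc gam phi b [u] = [(phi (b * u), [])]"
| "a_minus sc gam phi b (u1 # u2 # us) = [(1, (gp sc gam phi (b * u1) * u2) # us)]"

fun a_zero :: "('b \<Rightarrow> 'b \<Rightarrow> 'b) \<Rightarrow> 'b \<Rightarrow> 'b fop" where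
  "a_zero L b [] = []"
| "a_zero L b (u # us) = [(1, L b u # us)]"

definition Xop :: "(complex \<Rightarrow> 'b::ring_1 \<Rightarrow> 'b) \<Rightarrow> ('b \<Rightarrow> 'b) \<Rightarrow> ('b \<Rightarrow> complex) \<Rightarrow> ('b \<Rightarrow> 'b \<Rightarrow> 'b)
      \<Rightarrow> 'b \<Rightarrow> 'b fop" where
  "Xop sc gam phi L b w = a_plus b w @ a_minus sc gam phi b w @ a_zero L b w"

definition interval_partitions :: "nat \<Rightarrow> nat set set set" where
  "interval_partitions n = {\<pi>. partition_on {1..n} \<pi> \<and> (\<forall>V\<in>\<pi>. \<exists>a b. V = {a..b})}"

definition noncrossing :: "nat set set \<Rightarrow> bool" where
  "noncrossing \<pi> \<longleftrightarrow> (\<forall>V\<in>\<pi>. \<forall>W\<in>\<pi>. V \<noteq> W \<longrightarrow>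
      \<not> (\<exists>a b c d. a < b \<and> b < c \<and> c < d \<and> a \<in> V \<and> c \<in> V \<and> b \<in> W \<and> d \<in> W))"

definition NC_ns_tilde :: "nat \<Rightarrow> nat set set set" where
  "NC_ns_tilde n = {\<pi>. partition_on {1..n} \<pi> \<and> noncrossing \<pi> \<and> (\<forall>V\<in>\<pi>. card V \<ge> 2) \<and>
                       (\<exists>V\<in>\<pi>. 1 \<in> V \<and> n \<in> V)}"

definition block_of :: "nat set set \<Rightarrow> nat \<Rightarrow> nat set" where
  "block_of \<pi> i = (THE V. V \<in> \<pi> \<and> i \<in> V)"

definition W_M :: "(complex \<Rightarrow> 'b::ring_1 \<Rightarrow> 'b) \<Rightarrow> ('b \<Rightarrow> 'b) \<Rightarrow> ('b \<Rightarrow> complex) \<Rightarrow> ('b \<Rightarrow> 'b \<Rightarrow> 'b)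
      \<Rightarrow> nat set set \<Rightarrow> 'b list \<Rightarrow> 'b fop list" where
  "W_M sc gam phi L \<pi> us = map (\<lambda>i. let V = block_of \<pi> i in
      if i = Min V then a_minus sc gam phi (us ! (i - 1))
      else if i = Max V then a_plus (us ! (i - 1))
      else a_zero L (us ! (i - 1))) [1..<length us + 1]"

text \<open>B is the family of Boolean cumulants of the state psi (on lists of operators,
representing their product): psi[Y_1...Y_n] = sum over interval partitions of products of
B over the blocks. This relation determines B uniquely.\<close>

definition is_boolean_cumulants :: "('y list \<Rightarrow> complex) \<Rightarrow> ('y list \<Rightarrow> complex) \<Rightarrow> bool" where
  "is_boolean_cumulants psi B \<longleftrightarrow> (\<forall>Ys. Ys \<noteq> [] \<longrightarrow>
     psi Ys = (\<Sum>\<pi>\<in>interval_partitions (length Ys).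
                 \<Prod>V\<in>\<pi>. B (map (\<lambda>i. Ys ! (i - 1)) (sorted_list_of_set V))))"

end

theory Submission
  imports Defs
begin


datatype ty = TOp | TCl | TMd

lemma UNIV_ty: "(UNIV :: ty set) = {TOp, TCl, TMd}"
  using ty.exhaust by auto

instance ty :: finite
  by standard (simp add: UNIV_ty)

definition ext :: "('b list \<Rightarrow> complex) \<Rightarrow> 'b fvec \<Rightarrow> complex" where
  "ext F v = (\<Sum>p\<leftarrow>v. fst p * F (snd p))"

lemma ext_Nil[simp]: "ext F [] = 0" by (simp add: ext_def)
lemma ext_Cons[simp]: "ext F (p # v) = fst p * F (snd p) + ext F v" by (simp add: ext_def)
lemma ext_append[simp]: "ext F (v @ w) = ext F v + ext F w" by (simp add: ext_def)

lemma ext_scale: "ext F (map (\<lambda>q. (c * fst q, snd q)) v) = c * ext F v"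
  by (induction v) (auto simp: algebra_simps)

lemma ext_op_apply: "ext F (op_apply Y v) = ext (\<lambda>w. ext F (Y w)) v"
  by (induction v) (auto simp: op_apply_def ext_scale)

lemma ext_sum: "ext (\<lambda>w. \<Sum>t\<in>A. G t w) v = (\<Sum>t\<in>A. ext (G t) v)"
  by (induction v) (auto simp: sum_distrib_left sum.distrib)

fun S :: "'b fop list \<Rightarrow> ('b list \<Rightarrow> complex) \<Rightarrow> 'b list \<Rightarrow> complex" where
  "S [] F = F"
| "S (Y # Os) F = S Os (\<lambda>w. ext F (Y w))"

lemma ext_ops_apply: "ext F (ops_apply Os v) = ext (S Os F) v"
  by (induction Os arbitrary: F) (auto simp: ext_op_apply)

lemma S_sum: "S Os (\<lambda>w. \<Sum>t\<in>A. G t w) = (\<lambda>w. \<Sum>t\<in>A. S Os (G t) w)"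
  by (induction Os arbitrary: G) (auto simp: ext_sum)

definition E0 :: "'b list \<Rightarrow> complex" where "E0 w = (if w = [] then 1 else 0)"

lemma fock_ip_vac: "fock_ip sc st gam phi v vac = ext E0 v"
proof -
  have "ipw sc st gam phi w [] = E0 w" for w
    by (cases w) (auto simp: E0_def)
  then show ?thesis by (simp add: fock_ip_def vac_def ext_def)
qed

lemma vacuum_state_S: "vacuum_state sc st gam phi Os = S Os E0 []"
  unfolding vacuum_state_def fock_ip_vac ext_ops_apply by (simp add: vac_def)

context fixes sc :: "complex \<Rightarrow> 'b::ring_1 \<Rightarrow> 'b" and st :: "'b \<Rightarrow> 'b"
    and phi :: "'b \<Rightarrow> complex" and gam :: "'b \<Rightarrow> 'b" and L :: "'b \<Rightarrow> 'b \<Rightarrow> 'b"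
begin

fun opof :: "ty \<Rightarrow> 'b \<Rightarrow> 'b fop" where
  "opof TOp u = a_minus sc gam phi u"
| "opof TCl u = a_plus u"
| "opof TMd u = a_zero L u"

fun ops :: "ty list \<Rightarrow> 'b list \<Rightarrow> 'b fop list" where
  "ops (t # ts) (u # us) = opof t u # ops ts us"
| "ops _ _ = []"

definition val :: "ty list \<Rightarrow> 'b list \<Rightarrow> complex" where
  "val ts us = vacuum_state sc st gam phi (ops ts us)"

lemma ext_Xop: "ext F (Xop sc gam phi L u w) = (\<Sum>t\<in>UNIV. ext F (opof t u w))"
  by (simp add: Xop_def UNIV_ty)

lemma sum_words_Suc: "(\<Sum>ts\<in>{ts::ty list. length ts = Suc n}. f ts) = (\<Sum>t\<in>UNIV. \<Sum>ts\<in>{ts. length ts = n}. f (t # ts))"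
proof -
  have fin: "finite {ts::ty list. length ts = n}" for n
    using finite_lists_length_eq[of "UNIV::ty set" n] by simp
  have "{ts::ty list. length ts = Suc n} = (\<lambda>(t,ts). t # ts) ` (UNIV \<times> {ts. length ts = n})"
    by (auto simp: length_Suc_conv image_iff)
  moreover have "inj_on (\<lambda>(t,ts). t # ts) (UNIV \<times> {ts::ty list. length ts = n})"
    by (auto simp: inj_on_def)
  ultimately show ?thesis
    by (simp add: sum.reindex sum.cartesian_product fin split_def)
qed

lemma S_Xs: "length us = n \<Longrightarrow> S (map (Xop sc gam phi L) us) F w = (\<Sum>ts\<in>{ts. length ts = n}. S (ops ts us) F w)"
proof (induction us arbitrary: n F w)
  case Nil
  then show ?case by simp
next
  case (Cons u us)
  then obtain m where n: "n = Suc m" "length us = m" by auto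
  have "S (map (Xop sc gam phi L) (u # us)) F w = S (map (Xop sc gam phi L) us) (\<lambda>w. \<Sum>t\<in>UNIV. ext F (opof t u w)) w"
    by (simp add: ext_Xop)
  also have "\<dots> = (\<Sum>t\<in>UNIV. S (map (Xop sc gam phi L) us) (\<lambda>w. ext F (opof t u w)) w)"
    by (simp add: S_sum)
  also have "\<dots> = (\<Sum>t\<in>UNIV. \<Sum>ts\<in>{ts. length ts = m}. S (ops (t # ts) (u # us)) F w)"
    using Cons.IH[OF n(2)] by simp
  also have "\<dots> = (\<Sum>ts\<in>{ts. length ts = n}. S (ops ts (u # us)) F w)"
    by (simp add: n sum_words_Suc)
  finally show ?case .
qed

lemma psi_Xs: "vacuum_state sc st gam phi (map (Xop sc gam phi L) us) = (\<Sum>ts\<in>{ts. length ts = length us}. val ts us)"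
  by (simp add: vacuum_state_S S_Xs val_def)

end


fun e :: "ty \<Rightarrow> int" where "e TOp = -1" | "e TCl = 1" | "e TMd = 0"

definition hR :: "ty list \<Rightarrow> int \<Rightarrow> int" where "hR ts h = h + sum_list (map e ts)"

fun okR :: "ty list \<Rightarrow> int \<Rightarrow> bool" where
  "okR [] h = True"
| "okR (t # ts) h = (okR ts h \<and> (t = TCl \<or> hR ts h \<ge> 1))"

lemma hR_Nil[simp]: "hR [] h = h" by (simp add: hR_def)
lemma hR_Cons[simp]: "hR (t # ts) h = e t + hR ts h" by (simp add: hR_def)
lemma hR_append: "hR (t1 @ t2) h = hR t1 (hR t2 h)" by (simp add: hR_def)
lemma okR_append: "okR (t1 @ t2) h = (okR t2 h \<and> okR t1 (hR t2 h))"
  by (induction t1) (auto simp: hR_append)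

definition Valid :: "ty list \<Rightarrow> bool" where "Valid ts \<longleftrightarrow> okR ts 0 \<and> hR ts 0 = 0"
definition Irr :: "ty list \<Rightarrow> bool" where
  "Irr ts \<longleftrightarrow> Valid ts \<and> ts \<noteq> [] \<and> (\<forall>j. 0 < j \<and> j < length ts \<longrightarrow> hR (drop j ts) 0 \<noteq> 0)"

lemma ops_apply_append: "ops_apply (A @ B) v = ops_apply A (ops_apply B v)"
  by (induction A) auto

lemma op_apply_scale: "op_apply Y (map (\<lambda>q. (c * fst q, snd q)) v) = map (\<lambda>q. (c * fst q, snd q)) (op_apply Y v)"
  by (induction v) (auto simp: op_apply_def mult.assoc)

lemma ops_apply_scale: "ops_apply Os (map (\<lambda>q. (c * fst q, snd q)) v) = map (\<lambda>q. (c * fst q, snd q)) (ops_apply Os v)"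
  by (induction Os) (auto simp: op_apply_scale)

context fixes sc :: "complex \<Rightarrow> 'b::ring_1 \<Rightarrow> 'b" and st :: "'b \<Rightarrow> 'b"
    and phi :: "'b \<Rightarrow> complex" and gam :: "'b \<Rightarrow> 'b" and L :: "'b \<Rightarrow> 'b \<Rightarrow> 'b"
begin

lemma ops_append: "length t1 = length u1 \<Longrightarrow> ops sc phi gam L (t1 @ t2) (u1 @ u2) = ops sc phi gam L t1 u1 @ ops sc phi gam L t2 u2"
proof (induction t1 arbitrary: u1)
  case (Cons a t1)
  then show ?case by (cases u1) auto
qed simp

lemma ops_single:
  "length ts = length us \<Longrightarrow> okR ts (int (length w)) \<Longrightarrow>
   \<exists>c' w'. ops_apply (ops sc phi gam L ts us) [(c, w)] = [(c', w')] \<and> int (length w') = hR ts (int (length w))"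
proof (induction ts arbitrary: us)
  case Nil
  then show ?case by simp
next
  case (Cons t ts)
  then obtain u us' where us: "us = u # us'" "length ts = length us'" by (cases us) auto
  from Cons.prems have ok: "okR ts (int (length w))" and tc: "t = TCl \<or> hR ts (int (length w)) \<ge> 1" by auto
  from Cons.IH[OF us(2) ok] obtain c' w' where cw: "ops_apply (ops sc phi gam L ts us') [(c, w)] = [(c', w')]"
    "int (length w') = hR ts (int (length w))" by blast
  show ?case
  proof (cases t)
    case TOp
    with tc cw have "w' \<noteq> []" by auto
    then obtain x r where "w' = x # r" by (cases w') auto
    then show ?thesis using cw TOp us by (cases r) (auto simp: op_apply_def)
  next
    case TCl
    then show ?thesis using cw us by (auto simp: op_apply_def a_plus_def)
  next
    case TMd
    with tc cw have "w' \<noteq> []" by auto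
    then obtain x r where "w' = x # r" by (cases w') auto
    then show ?thesis using cw TMd us by (auto simp: op_apply_def)
  qed
qed

lemma ops_fail:
  "length ts = length us \<Longrightarrow> \<not> okR ts (int (length w)) \<Longrightarrow> ops_apply (ops sc phi gam L ts us) [(c, w)] = []"
proof (induction ts arbitrary: us)
  case Nil
  then show ?case by simp
next
  case (Cons t ts)
  then obtain u us' where us: "us = u # us'" "length ts = length us'" by (cases us) auto
  show ?case
  proof (cases "okR ts (int (length w))")
    case False
    then show ?thesis using Cons.IH[OF us(2)] us by (simp add: op_apply_def)
  next
    case True
    with Cons.prems have tc: "t \<noteq> TCl" "hR ts (int (length w)) < 1" by auto
    from ops_single[OF us(2) True] obtain c' w' where cw: "ops_apply (ops sc phi gam L ts us') [(c, w)] = [(c', w')]"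
      "int (length w') = hR ts (int (length w))" by blast
    have "int (length w') < 1" using tc(2) cw(2) by simp
    then have "w' = []" by simp
    then show ?thesis using cw tc us by (cases t) (auto simp: op_apply_def)
  qed
qed

lemma val_ext: "val sc st phi gam L ts us = ext E0 (ops_apply (ops sc phi gam L ts us) vac)"
  by (simp add: val_def vacuum_state_def fock_ip_vac)

lemma val_invalid: "length ts = length us \<Longrightarrow> \<not> Valid ts \<Longrightarrow> val sc st phi gam L ts us = 0"
proof -
  assume l: "length ts = length us" and nv: "\<not> Valid ts"
  show ?thesis
  proof (cases "okR ts 0")
    case False
    then show ?thesis using ops_fail[OF l, of "[]" 1] by (simp add: val_ext vac_def)
  next
    case True
    from ops_single[OF l, of "[]" 1] True obtain c' w' where cw: "ops_apply (ops sc phi gam L ts us) [(1, [])] = [(c', w')]"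
      "int (length w') = hR ts 0" by auto
    with nv True have "w' \<noteq> []" by (auto simp: Valid_def)
    then show ?thesis using cw by (simp add: val_ext vac_def E0_def)
  qed
qed

lemma val_append:
  assumes "length t1 = length u1" "length t2 = length u2" "Valid t2"
  shows "val sc st phi gam L (t1 @ t2) (u1 @ u2) = val sc st phi gam L t1 u1 * val sc st phi gam L t2 u2"
proof -
  from ops_single[OF assms(2), of "[]" 1] assms(3) obtain c' w' where cw: "ops_apply (ops sc phi gam L t2 u2) [(1, [])] = [(c', w')]"
      "int (length w') = hR t2 0" by (auto simp: Valid_def)
  with assms(3) have w': "w' = []" by (auto simp: Valid_def)
  have v2: "val sc st phi gam L t2 u2 = c'" using cw w' by (simp add: val_ext vac_def E0_def)
  have "[(c', w')] = map (\<lambda>q. (c' * fst q, snd q)) [(1, [])]" using w' by simp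
  then have "ops_apply (ops sc phi gam L (t1 @ t2) (u1 @ u2)) vac = map (\<lambda>q. (c' * fst q, snd q)) (ops_apply (ops sc phi gam L t1 u1) vac)"
    using cw by (simp add: ops_append[OF assms(1)] ops_apply_append vac_def ops_apply_scale del: list.map)
  then show ?thesis using v2 by (simp add: val_ext ext_scale)
qed

end


lemma fin_words: "finite {ts::ty list. length ts = n}"
  using finite_lists_length_eq[of "UNIV::ty set" n] by simp

lemma fin_words_P: "finite {ts::ty list. length ts = n \<and> P ts}"
  by (rule finite_subset[OF _ fin_words[of n]]) auto

lemma drop_take_app: "j \<le> k \<Longrightarrow> drop j (take k ts) @ drop k ts = drop j ts"
  by (metis append_take_drop_id diff_add drop_drop drop_take)

lemma hR_drop_take: "j \<le> k \<Longrightarrow> hR (drop j (take k ts)) (hR (drop k ts) h) = hR (drop j ts) h"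
  by (metis drop_take_app hR_append)

lemma okR_drop: "okR ts h \<Longrightarrow> okR (drop j ts) h"
  by (metis append_take_drop_id okR_append)

lemma okR_take: "okR ts h \<Longrightarrow> okR (take k ts) (hR (drop k ts) h)"
  by (metis append_take_drop_id okR_append)

definition kf :: "ty list \<Rightarrow> nat" where "kf ts = (LEAST j. 0 < j \<and> hR (drop j ts) 0 = 0)"

lemma Valid_append: "Valid t1 \<Longrightarrow> Valid t2 \<Longrightarrow> Valid (t1 @ t2)"
  by (simp add: Valid_def okR_append hR_append)

lemma kf_props:
  assumes "Valid ts" "ts \<noteq> []"
  shows "0 < kf ts" "kf ts \<le> length ts" "hR (drop (kf ts) ts) 0 = 0"
    "\<And>j. 0 < j \<Longrightarrow> j < kf ts \<Longrightarrow> hR (drop j ts) 0 \<noteq> 0"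
proof -
  have ex: "0 < length ts \<and> hR (drop (length ts) ts) 0 = 0" using assms by simp
  show "0 < kf ts" "hR (drop (kf ts) ts) 0 = 0"
    using LeastI[of "\<lambda>j. 0 < j \<and> hR (drop j ts) 0 = 0", OF ex] by (auto simp: kf_def)
  show "kf ts \<le> length ts" using Least_le[of "\<lambda>j. 0 < j \<and> hR (drop j ts) 0 = 0", OF ex] by (simp add: kf_def)
  show "\<And>j. 0 < j \<Longrightarrow> j < kf ts \<Longrightarrow> hR (drop j ts) 0 \<noteq> 0"
    using not_less_Least[of _ "\<lambda>j. 0 < j \<and> hR (drop j ts) 0 = 0"] by (auto simp: kf_def)
qed

lemma decomp_valid:
  assumes "Valid ts" "ts \<noteq> []"
  shows "Irr (take (kf ts) ts)" "Valid (drop (kf ts) ts)"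
proof -
  note k = kf_props[OF assms]
  show "Valid (drop (kf ts) ts)" using assms(1) k(3) okR_drop by (auto simp: Valid_def)
  have v: "Valid (take (kf ts) ts)"
    using assms(1) k(3) okR_take[of ts 0 "kf ts"] hR_drop_take[of 0 "kf ts" ts 0] by (auto simp: Valid_def)
  have "hR (drop j (take (kf ts) ts)) 0 \<noteq> 0" if "0 < j" "j < length (take (kf ts) ts)" for j
    using that k hR_drop_take[of j "kf ts" ts 0] by auto
  then show "Irr (take (kf ts) ts)" using v k(1) assms(2) by (auto simp: Irr_def)
qed

lemma kf_append:
  assumes "Irr t1" "Valid t2"
  shows "kf (t1 @ t2) = length t1"
proof -
  have h: "hR (drop j (t1 @ t2)) 0 = hR (drop j t1) 0" if "j \<le> length t1" for j
    using that assms(2) by (simp add: hR_append Valid_def)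
  have a: "0 < length t1 \<and> hR (drop (length t1) (t1 @ t2)) 0 = 0" using assms by (simp add: Irr_def Valid_def)
  show ?thesis unfolding kf_def
  proof (rule Least_equality)
    show "0 < length t1 \<and> hR (drop (length t1) (t1 @ t2)) 0 = 0" by (rule a)
    fix y assume y: "0 < y \<and> hR (drop y (t1 @ t2)) 0 = 0"
    show "length t1 \<le> y"
    proof (rule ccontr)
      assume "\<not> length t1 \<le> y"
      then show False using y h[of y] assms(1) by (auto simp: Irr_def)
    qed
  qed
qed

definition Vs :: "nat \<Rightarrow> ty list set" where "Vs n = {ts. length ts = n \<and> Valid ts}"
definition Is :: "nat \<Rightarrow> ty list set" where "Is n = {ts. length ts = n \<and> Irr ts}"

lemma fin_Vs: "finite (Vs n)" by (simp add: Vs_def fin_words_P)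
lemma fin_Is: "finite (Is n)" by (simp add: Is_def fin_words_P)

lemma Irr_Valid: "Irr ts \<Longrightarrow> Valid ts" by (simp add: Irr_def)

context fixes sc :: "complex \<Rightarrow> 'b::ring_1 \<Rightarrow> 'b" and st :: "'b \<Rightarrow> 'b"
    and phi :: "'b \<Rightarrow> complex" and gam :: "'b \<Rightarrow> 'b" and L :: "'b \<Rightarrow> 'b \<Rightarrow> 'b"
begin

lemma sum_Valid:
  assumes "length us = n" "n \<ge> 1"
  shows "(\<Sum>ts\<in>Vs n. val sc st phi gam L ts us) =
    (\<Sum>k\<in>{1..n}. (\<Sum>t1\<in>Is k. val sc st phi gam L t1 (take k us)) * (\<Sum>t2\<in>Vs (n - k). val sc st phi gam L t2 (drop k us)))"
proof -
  let ?v = "val sc st phi gam L"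
  let ?T = "SIGMA k:{1..n}. Is k \<times> Vs (n - k)"
  let ?h = "\<lambda>(k, t1, t2). ?v t1 (take k us) * ?v t2 (drop k us)"
  have "(\<Sum>ts\<in>Vs n. ?v ts us) = sum ?h ?T"
  proof (rule sum.reindex_bij_witness[where j = "\<lambda>ts. (kf ts, take (kf ts) ts, drop (kf ts) ts)" and i = "\<lambda>(k, t1, t2). t1 @ t2"])
    fix a assume "a \<in> Vs n"
    then show "(case (kf a, take (kf a) a, drop (kf a) a) of (k, t1, t2) \<Rightarrow> t1 @ t2) = a" by simp
  next
    fix a assume a: "a \<in> Vs n"
    then have ne: "a \<noteq> []" using assms by (auto simp: Vs_def)
    note k = kf_props[OF _ ne] decomp_valid[OF _ ne]
    show "(kf a, take (kf a) a, drop (kf a) a) \<in> ?T"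
      using a k by (auto simp: Vs_def Is_def min_def)
    have "?v a us = ?v (take (kf a) a @ drop (kf a) a) (take (kf a) us @ drop (kf a) us)" by simp
    also have "\<dots> = ?v (take (kf a) a) (take (kf a) us) * ?v (drop (kf a) a) (drop (kf a) us)"
      by (rule val_append) (use a k assms in \<open>auto simp: Vs_def\<close>)
    finally show "?h (kf a, take (kf a) a, drop (kf a) a) = ?v a us" by simp
  next
    fix b assume b: "b \<in> ?T"
    then obtain k t1 t2 where b': "b = (k, t1, t2)" "k \<in> {1..n}" "t1 \<in> Is k" "t2 \<in> Vs (n - k)" by auto
    then have "kf (t1 @ t2) = k" using kf_append[of t1 t2] by (auto simp: Is_def Vs_def)
    then show "(kf (case b of (k, t1, t2) \<Rightarrow> t1 @ t2), take (kf (case b of (k, t1, t2) \<Rightarrow> t1 @ t2)) (case b of (k, t1, t2) \<Rightarrow> t1 @ t2),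
          drop (kf (case b of (k, t1, t2) \<Rightarrow> t1 @ t2)) (case b of (k, t1, t2) \<Rightarrow> t1 @ t2)) = b"
      using b' by (auto simp: Is_def)
    show "(case b of (k, t1, t2) \<Rightarrow> t1 @ t2) \<in> Vs n"
      using b' by (auto simp: Is_def Vs_def Irr_def intro: Valid_append)
  qed
  also have "\<dots> = (\<Sum>k\<in>{1..n}. \<Sum>p\<in>Is k \<times> Vs (n - k). ?h (k, p))"
    by (subst sum.Sigma) (auto simp: fin_Is fin_Vs split_def)
  also have "\<dots> = (\<Sum>k\<in>{1..n}. (\<Sum>t1\<in>Is k. ?v t1 (take k us)) * (\<Sum>t2\<in>Vs (n - k). ?v t2 (drop k us)))"
    by (simp add: sum_product sum.cartesian_product split_def)
  finally show ?thesis .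
qed

lemma psi_Xs_Valid: "vacuum_state sc st gam phi (map (Xop sc gam phi L) us) = (\<Sum>ts\<in>Vs (length us). val sc st phi gam L ts us)"
proof -
  have "vacuum_state sc st gam phi (map (Xop sc gam phi L) us) = (\<Sum>ts\<in>{ts. length ts = length us}. val sc st phi gam L ts us)"
    by (rule psi_Xs)
  also have "\<dots> = (\<Sum>ts\<in>Vs (length us). val sc st phi gam L ts us)"
    by (rule sum.mono_neutral_right) (auto simp: fin_words Vs_def val_invalid)
  finally show ?thesis .
qed

end


lemma sorted_shift: "finite V \<Longrightarrow> sorted_list_of_set ((\<lambda>x. x + k) ` V) = map (\<lambda>x. x + k) (sorted_list_of_set (V::nat set))"
proof -
  assume f: "finite V"
  let ?xs = "map (\<lambda>x. x + k) (sorted_list_of_set V)"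
  have "sorted ?xs" using f by (simp add: sorted_map)
  moreover have "distinct ?xs" using f by (simp add: distinct_map inj_on_def)
  moreover have "set ?xs = (\<lambda>x. x + k) ` V" using f by simp
  ultimately show ?thesis by (metis sorted_list_of_set.idem_if_sorted_distinct)
qed

definition sh :: "nat \<Rightarrow> nat set \<Rightarrow> nat set" where "sh k V = (\<lambda>x. x + k) ` V"
definition ush :: "nat \<Rightarrow> nat set \<Rightarrow> nat set" where "ush k V = (\<lambda>x. x - k) ` V"
definition ins :: "nat \<Rightarrow> nat set set \<Rightarrow> nat set set" where "ins k s = insert {1..k} (sh k ` s)"

lemma fin_ip: "finite (interval_partitions n)"
  by (rule finite_subset[OF _ finitely_many_partition_on[of "{1..n}"]]) (auto simp: interval_partitions_def)

lemma ip_0: "interval_partitions 0 = {{}}"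
  by (auto simp: interval_partitions_def partition_on_empty)

lemma ush_sh[simp]: "ush k (sh k V) = V"
  by (auto simp: ush_def sh_def image_image)

lemma sh_ush: "V \<subseteq> {k<..} \<Longrightarrow> sh k (ush k V) = V"
  by (force simp: ush_def sh_def image_image)

lemma inj_sh: "inj_on (sh k) A"
proof -
  have "inj (\<lambda>x::nat. x + k)" by (simp add: inj_on_def)
  then show ?thesis unfolding inj_on_def sh_def using inj_image_eq_iff[OF \<open>inj (\<lambda>x::nat. x + k)\<close>] by blast
qed

lemma blocks_sub: "partition_on A P \<Longrightarrow> V \<in> P \<Longrightarrow> V \<subseteq> A"
  by (auto simp: partition_on_def)

lemma part_unique: "partition_on A P \<Longrightarrow> V \<in> P \<Longrightarrow> W \<in> P \<Longrightarrow> x \<in> V \<Longrightarrow> x \<in> W \<Longrightarrow> V = W"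
  by (auto simp: partition_on_def disjoint_def)

lemma ins_ip:
  assumes k: "k \<in> {1..n}" and s: "s \<in> interval_partitions (n - k)"
  shows "ins k s \<in> interval_partitions n"
proof -
  from s have ps: "partition_on {1..n-k} s" and iv: "\<forall>V\<in>s. \<exists>a b. V = {a..b}"
    by (auto simp: interval_partitions_def)
  have e: "{} \<notin> s" using ps by (auto simp: partition_on_def)
  have "partition_on ((\<lambda>x. x + k) ` {1..n-k}) ((`) (\<lambda>x. x + k) ` s - {{}})"
    by (rule partition_on_inj_image[OF ps]) (auto simp: inj_on_def)
  moreover have "(\<lambda>x. x + k) ` {1..n-k} = {1..n} - {1..k}" using k by auto
  moreover have "(`) (\<lambda>x. x + k) ` s - {{}} = sh k ` s" using e by (auto simp: sh_def)
  ultimately have p2: "partition_on ({1..n} - {1..k}) (sh k ` s)" by simp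
  have "disjnt {1..k} (\<Union> (sh k ` s))"
    using p2 by (auto simp: partition_on_def disjnt_def)
  then have "partition_on {1..n} (insert {1..k} (sh k ` s)) = (partition_on ({1..n} - {1..k}) (sh k ` s) \<and> {1..k} \<subseteq> {1..n} \<and> {1..k} \<noteq> {})"
    by (rule partition_on_insert)
  then have "partition_on {1..n} (ins k s)"
    unfolding ins_def using p2 k by auto
  moreover have "\<exists>a b. sh k V = {a..b}" if V: "V \<in> s" for V
  proof -
    obtain a b where "V = {a..b}" using iv V by blast
    then have "sh k V = {a+k..b+k}" by (simp add: sh_def)
    then show ?thesis by blast
  qed
  then have "\<forall>V\<in>ins k s. \<exists>a b. V = {a..b}"
    by (auto simp: ins_def)
  ultimately show ?thesis by (simp add: interval_partitions_def)
qed

lemma first_block: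
  assumes "s \<in> interval_partitions n" "n \<ge> 1"
  shows "\<exists>k\<in>{1..n}. {1..k} \<in> s"
proof -
  from assms have ps: "partition_on {1..n} s" and iv: "\<forall>V\<in>s. \<exists>a b. V = {a..b}"
    by (auto simp: interval_partitions_def)
  have "1 \<in> \<Union>s" using ps assms(2) by (auto simp: partition_on_def)
  then obtain V where V: "V \<in> s" "1 \<in> V" by auto
  then obtain a b where ab: "V = {a..b}" using iv by auto
  have sub: "V \<subseteq> {1..n}" using blocks_sub[OF ps V(1)] .
  have "a \<in> V" using ab V(2) by auto
  then have "a = 1" using sub V(2) ab by auto
  moreover have "b \<le> n" using sub ab V(2) by auto
  ultimately show ?thesis using V ab by (intro bexI[of _ b]) auto
qed

lemma nin_sh: "partition_on {1..m} s \<Longrightarrow> 1 \<le> k \<Longrightarrow> {1..k} \<notin> sh k ` s"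
proof
  assume ps: "partition_on {1..m} s" and k: "1 \<le> k" and "{1..k} \<in> sh k ` s"
  then obtain V where V: "V \<in> s" "{1..k} = sh k V" by blast
  have "1 \<in> sh k V" using V(2) k by auto
  then obtain x where "x \<in> V" "1 = x + k" by (auto simp: sh_def)
  then show False using blocks_sub[OF ps V(1)] k by auto
qed

definition kk :: "nat set set \<Rightarrow> nat" where "kk s = (THE k. 1 \<le> k \<and> {1..k} \<in> s)"

lemma kk_eq:
  assumes "partition_on A s" "{1..k} \<in> s" "1 \<le> k"
  shows "kk s = k"
  unfolding kk_def
proof (rule the_equality)
  show "1 \<le> k \<and> {1..k} \<in> s" using assms by auto
  fix k' assume "1 \<le> k' \<and> {1..k'} \<in> s"
  then have "{1..k'} = {1..k}" using part_unique[OF assms(1), of "{1..k'}" "{1..k}" 1] assms by auto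
  then show "k' = k" using assms \<open>1 \<le> k' \<and> {1..k'} \<in> s\<close> by (metis atLeastatMost_empty_iff2 bot_nat_0.extremum_uniqueI le_antisym order.refl atLeastAtMost_iff)
qed

lemma rest_ip:
  assumes s: "s \<in> interval_partitions n" and k: "k \<in> {1..n}" and b: "{1..k} \<in> s"
  shows "ush k ` (s - {{1..k}}) \<in> interval_partitions (n - k)" "ins k (ush k ` (s - {{1..k}})) = s"
proof -
  from s have ps: "partition_on {1..n} s" and iv: "\<forall>V\<in>s. \<exists>a b. V = {a..b}"
    by (auto simp: interval_partitions_def)
  let ?r = "s - {{1..k}}"
  have sins: "s = insert {1..k} ?r" using b by auto
  have dj: "disjnt {1..k} (\<Union> ?r)"
    using ps b by (auto simp: partition_on_def disjoint_def disjnt_def)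
  have pr: "partition_on ({1..n} - {1..k}) ?r"
    using ps sins partition_on_insert[OF dj, of "{1..n}"] by simp
  have rsub: "V \<subseteq> {k<..}" if "V \<in> ?r" for V
    using blocks_sub[OF pr that] by auto
  have e: "{} \<notin> ?r" using pr by (auto simp: partition_on_def)
  have "partition_on ((\<lambda>x. x - k) ` ({1..n} - {1..k})) ((`) (\<lambda>x. x - k) ` ?r - {{}})"
    by (rule partition_on_inj_image[OF pr]) (auto simp: inj_on_def)
  moreover have "(\<lambda>x. x - k) ` ({1..n} - {1..k}) = {1..n-k}"
  proof
    show "(\<lambda>x. x - k) ` ({1..n} - {1..k}) \<subseteq> {1..n-k}" by auto
    show "{1..n-k} \<subseteq> (\<lambda>x. x - k) ` ({1..n} - {1..k})"
    proof
      fix y assume "y \<in> {1..n-k}"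
      then show "y \<in> (\<lambda>x. x - k) ` ({1..n} - {1..k})" by (intro image_eqI[of _ _ "y + k"]) auto
    qed
  qed
  moreover have "(`) (\<lambda>x. x - k) ` ?r - {{}} = ush k ` ?r" using e by (auto simp: ush_def)
  ultimately have p1: "partition_on {1..n-k} (ush k ` ?r)" by simp
  have "\<exists>a b. W = {a..b}" if W: "W \<in> ush k ` ?r" for W
  proof -
    obtain V where V: "V \<in> ?r" "W = ush k V" using W by blast
    obtain a b where ab: "V = {a..b}" using iv V(1) by blast
    have "V \<noteq> {}" using e V by auto
    then have "a > k" using rsub[OF V(1)] ab by auto
    have "W = {a - k..b - k}"
    proof
      show "W \<subseteq> {a - k..b - k}" using V ab by (auto simp: ush_def)
      show "{a - k..b - k} \<subseteq> W"
      proof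
        fix y assume "y \<in> {a - k..b - k}"
        then show "y \<in> W" using V ab \<open>a > k\<close> by (auto simp: ush_def intro!: image_eqI[of _ _ "y + k"])
      qed
    qed
    then show ?thesis by blast
  qed
  with p1 show "ush k ` ?r \<in> interval_partitions (n - k)" by (simp add: interval_partitions_def)
  have "sh k ` ush k ` ?r = (\<lambda>V. V) ` ?r"
    unfolding image_image by (rule image_cong[OF refl]) (simp add: sh_ush rsub)
  then have "sh k ` ush k ` ?r = ?r" by simp
  then show "ins k (ush k ` ?r) = s" using sins by (simp add: ins_def)
qed

lemma bool_rec:
  fixes psi :: "'y list \<Rightarrow> complex"
  assumes bc: "is_boolean_cumulants psi B" and p0: "psi [] = 1" and ne: "Ys \<noteq> []"
  shows "psi Ys = (\<Sum>k\<in>{1..length Ys}. B (take k Ys) * psi (drop k Ys))"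
proof -
  define P where "P Zs = (\<Sum>\<pi>\<in>interval_partitions (length Zs).
                 \<Prod>V\<in>\<pi>. B (map (\<lambda>i. Zs ! (i - 1)) (sorted_list_of_set V)))" for Zs :: "'y list"
  have psiP: "psi Zs = P Zs" for Zs
  proof (cases "Zs = []")
    case True
    then show ?thesis using p0 by (simp add: P_def ip_0)
  next
    case False
    then show ?thesis using bc by (simp add: is_boolean_cumulants_def P_def)
  qed
  define n where "n = length Ys"
  have n1: "n \<ge> 1" using ne by (simp add: n_def Suc_le_eq)
  define f where "f \<pi> = (\<Prod>V\<in>\<pi>. B (map (\<lambda>i. Ys ! (i - 1)) (sorted_list_of_set V)))" for \<pi>
  let ?T = "SIGMA k:{1..n}. interval_partitions (n - k)"
  let ?h = "\<lambda>(k, s). B (take k Ys) * (\<Prod>V\<in>s. B (map (\<lambda>i. drop k Ys ! (i - 1)) (sorted_list_of_set V)))"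
  have "P Ys = (\<Sum>\<pi>\<in>interval_partitions n. f \<pi>)" by (simp add: P_def f_def n_def)
  also have "\<dots> = sum ?h ?T"
  proof (rule sum.reindex_bij_witness[where j = "\<lambda>s. (kk s, ush (kk s) ` (s - {{1..kk s}}))" and i = "\<lambda>(k, s). ins k s"])
    fix a assume a: "a \<in> interval_partitions n"
    then obtain k where k: "k \<in> {1..n}" "{1..k} \<in> a" using first_block n1 by blast
    have pa: "partition_on {1..n} a" using a by (simp add: interval_partitions_def)
    have kk: "kk a = k" using kk_eq[OF pa k(2)] k(1) by simp
    note r = rest_ip[OF a k]
    show "(case (kk a, ush (kk a) ` (a - {{1..kk a}})) of (k, s) \<Rightarrow> ins k s) = a" using r kk by simp
    show "(kk a, ush (kk a) ` (a - {{1..kk a}})) \<in> ?T" using r kk k by simp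
    show "?h (kk a, ush (kk a) ` (a - {{1..kk a}})) = f a"
    proof -
      let ?s = "ush k ` (a - {{1..k}})"
      have ps: "partition_on {1..n-k} ?s" using r(1) by (simp add: interval_partitions_def)
      have fin: "finite ?s" using finite_elements[OF _ ps] by simp
      have nin: "{1..k} \<notin> sh k ` ?s" using nin_sh[OF ps] k by simp
      have "f a = f (ins k ?s)" using r by simp
      also have "\<dots> = B (map (\<lambda>i. Ys ! (i - 1)) (sorted_list_of_set {1..k})) *
          (\<Prod>V\<in>sh k ` ?s. B (map (\<lambda>i. Ys ! (i - 1)) (sorted_list_of_set V)))"
        unfolding f_def ins_def using fin nin by (simp add: prod.insert)
      also have "(\<Prod>V\<in>sh k ` ?s. B (map (\<lambda>i. Ys ! (i - 1)) (sorted_list_of_set V)))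
          = (\<Prod>V\<in>?s. B (map (\<lambda>i. Ys ! (i - 1)) (sorted_list_of_set (sh k V))))"
        by (simp add: prod.reindex inj_sh)
      also have "\<dots> = (\<Prod>V\<in>?s. B (map (\<lambda>i. drop k Ys ! (i - 1)) (sorted_list_of_set V)))"
      proof (rule prod.cong[OF refl])
        fix V assume V: "V \<in> ?s"
        have Vs: "V \<subseteq> {1..n-k}" using blocks_sub[OF ps V] .
        then have fV: "finite V" using finite_subset by blast
        have "map (\<lambda>i. Ys ! (i - 1)) (sorted_list_of_set (sh k V)) = map (\<lambda>i. drop k Ys ! (i - 1)) (sorted_list_of_set V)"
          unfolding sh_def sorted_shift[OF fV] map_map o_def
        proof (rule map_cong[OF refl])
          fix x assume "x \<in> set (sorted_list_of_set V)"
          then have "x \<in> V" using fV by simp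
          then have "1 \<le> x" "x \<le> n - k" using Vs by auto
          then show "Ys ! (x + k - 1) = drop k Ys ! (x - 1)"
            using k by (simp add: n_def add.commute)
        qed
        then show "B (map (\<lambda>i. Ys ! (i - 1)) (sorted_list_of_set (sh k V))) = B (map (\<lambda>i. drop k Ys ! (i - 1)) (sorted_list_of_set V))"
          by simp
      qed
      also have "map (\<lambda>i. Ys ! (i - 1)) (sorted_list_of_set {1..k}) = take k Ys"
      proof -
        have "sorted_list_of_set {1..k} = [1..<Suc k]" by (simp add: atLeastLessThanSuc_atLeastAtMost[symmetric])
        moreover have "map (\<lambda>i. Ys ! (i - 1)) [1..<Suc k] = take k Ys"
          by (rule nth_equalityI) (use k in \<open>auto simp: n_def simp del: upt_Suc\<close>)
        ultimately show ?thesis by simp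
      qed
      finally show ?thesis using kk by simp
    qed
  next
    fix b assume b: "b \<in> ?T"
    then obtain k s where b': "b = (k, s)" "k \<in> {1..n}" "s \<in> interval_partitions (n - k)" by auto
    have ip: "ins k s \<in> interval_partitions n" using ins_ip[OF b'(2,3)] .
    then have pi: "partition_on {1..n} (ins k s)" by (simp add: interval_partitions_def)
    have kk: "kk (ins k s) = k" using kk_eq[OF pi, of k] b'(2) by (simp add: ins_def)
    have nin: "{1..k} \<notin> sh k ` s" using nin_sh[of "n - k" s k] b' by (simp add: interval_partitions_def)
    have "ins k s - {{1..k}} = sh k ` s" using nin by (auto simp: ins_def)
    then have "ush k ` (ins k s - {{1..k}}) = s" by (simp add: image_image)
    then show "(kk (case b of (k, s) \<Rightarrow> ins k s), ush (kk (case b of (k, s) \<Rightarrow> ins k s)) ` ((case b of (k, s) \<Rightarrow> ins k s) - {{1..kk (case b of (k, s) \<Rightarrow> ins k s)}})) = b"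
      using b' kk by simp
    show "(case b of (k, s) \<Rightarrow> ins k s) \<in> interval_partitions n" using ip b' by simp
  qed
  also have "\<dots> = (\<Sum>k\<in>{1..n}. \<Sum>s\<in>interval_partitions (n - k). ?h (k, s))"
    by (subst sum.Sigma) (auto simp: fin_ip split_def)
  also have "\<dots> = (\<Sum>k\<in>{1..n}. B (take k Ys) * P (drop k Ys))"
    by (simp add: P_def sum_distrib_left n_def)
  finally show ?thesis using psiP n_def by simp
qed


definition g :: "ty list \<Rightarrow> nat \<Rightarrow> int" where "g ts j = hR (drop j ts) 0"

lemma g_step: "j < length ts \<Longrightarrow> g ts j = e (ts ! j) + g ts (Suc j)"
  by (simp add: g_def Cons_nth_drop_Suc[symmetric])

lemma g_pred: "1 \<le> q \<Longrightarrow> q \<le> length ts \<Longrightarrow> g ts (q - 1) = e (ts ! (q - 1)) + g ts q"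
  using g_step[of "q - 1" ts] by simp

lemma g_len[simp]: "g ts (length ts) = 0" by (simp add: g_def)

lemma okR_nth: "okR ts h \<longleftrightarrow> (\<forall>j<length ts. ts ! j = TCl \<or> hR (drop (Suc j) ts) h \<ge> 1)"
proof (induction ts)
  case Nil
  then show ?case by simp
next
  case (Cons t ts)
  show ?case
    by (simp add: Cons.IH All_less_Suc2 less_Suc_eq_0_disj) (auto simp: less_Suc_eq_0_disj)
qed

lemma okR_nonneg: "okR ts h \<Longrightarrow> h \<ge> 0 \<Longrightarrow> hR ts h \<ge> 0"
proof (induction ts)
  case (Cons t ts)
  then show ?case by (cases t) auto
qed simp

lemma valid_g_nonneg: "Valid ts \<Longrightarrow> g ts j \<ge> 0"
  unfolding g_def Valid_def using okR_drop okR_nonneg by fastforce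

lemma valid_g_md: "Valid ts \<Longrightarrow> j < length ts \<Longrightarrow> ts ! j \<noteq> TCl \<Longrightarrow> g ts (Suc j) \<ge> 1"
  unfolding g_def Valid_def using okR_nth by blast

lemma e_cases: "e t = -1 \<and> t = TOp \<or> e t = 0 \<and> t = TMd \<or> e t = 1 \<and> t = TCl"
  by (cases t) auto

definition isop :: "ty list \<Rightarrow> nat \<Rightarrow> nat \<Rightarrow> bool" where
  "isop ts q i \<longleftrightarrow> 1 \<le> q \<and> q \<le> i \<and> i \<le> length ts \<and> ts ! (q - 1) = TOp \<and>
     (\<forall>m. q \<le> m \<and> m < i \<longrightarrow> g ts m \<ge> g ts q) \<and>
     (q = i \<or> (ts ! (i - 1) \<noteq> TOp \<and> g ts (i - 1) = g ts q))"

lemma isop_unique_lt: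
  assumes "isop ts q i" "isop ts q' i" "q < q'"
  shows False
proof -
  have a: "1 \<le> q" "q \<le> i" "i \<le> length ts" "ts ! (q - 1) = TOp" "\<forall>m. q \<le> m \<and> m < i \<longrightarrow> g ts m \<ge> g ts q"
    "q = i \<or> (ts ! (i - 1) \<noteq> TOp \<and> g ts (i - 1) = g ts q)" using assms(1) by (auto simp: isop_def)
  have b: "1 \<le> q'" "q' \<le> i" "ts ! (q' - 1) = TOp"
    "q' = i \<or> (ts ! (i - 1) \<noteq> TOp \<and> g ts (i - 1) = g ts q')" using assms(2) by (auto simp: isop_def)
  have oi: "q \<noteq> i" using assms(3) b(2) by simp
  with a(6) have c: "ts ! (i - 1) \<noteq> TOp" "g ts (i - 1) = g ts q" by auto
  have "q' \<noteq> i" using c(1) b(3) by auto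
  with b(4) have go: "g ts q' = g ts q" using c by auto
  have "g ts (q' - 1) = e (ts ! (q' - 1)) + g ts q'" using g_pred[of q' ts] b a(3) by simp
  then have "g ts (q' - 1) = g ts q - 1" using b(3) go by simp
  moreover have "q \<le> q' - 1" "q' - 1 < i" using assms(3) b(2) \<open>q' \<noteq> i\<close> by auto
  then have "g ts (q' - 1) \<ge> g ts q" using a(5) by blast
  ultimately show False by simp
qed

lemma isop_unique: "isop ts q i \<Longrightarrow> isop ts q' i \<Longrightarrow> q = q'"
  using isop_unique_lt by (metis linorder_neqE_nat)

definition opener :: "ty list \<Rightarrow> nat \<Rightarrow> nat" where "opener ts i = (THE q. isop ts q i)"

lemma opener_eq: "isop ts q i \<Longrightarrow> opener ts i = q"
  unfolding opener_def using isop_unique by blast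

definition tyof :: "nat set set \<Rightarrow> nat \<Rightarrow> ty" where
  "tyof \<pi> i = (let V = block_of \<pi> i in if i = Min V then TOp else if i = Max V then TCl else TMd)"

definition tyl :: "nat set set \<Rightarrow> nat \<Rightarrow> ty list" where "tyl \<pi> n = map (tyof \<pi>) [1..<n+1]"

lemma tyl_nth: "j < n \<Longrightarrow> tyl \<pi> n ! j = tyof \<pi> (Suc j)"
  by (simp add: tyl_def del: upt_Suc)

lemma tyl_len[simp]: "length (tyl \<pi> n) = n" by (simp add: tyl_def)

definition dec :: "nat \<Rightarrow> ty list \<Rightarrow> nat set set" where
  "dec n ts = (\<lambda>i. {k\<in>{1..n}. opener ts k = opener ts i}) ` {1..n}"

locale ncp =
  fixes n :: nat and \<pi> :: "nat set set"
  assumes part: "partition_on {1..n} \<pi>" and nc: "noncrossing \<pi>" and ns: "\<forall>V\<in>\<pi>. card V \<ge> 2"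
begin

lemma Vsub: "V \<in> \<pi> \<Longrightarrow> V \<subseteq> {1..n}" using blocks_sub[OF part] .
lemma Vfin: "V \<in> \<pi> \<Longrightarrow> finite V" using Vsub finite_subset by blast
lemma Vne: "V \<in> \<pi> \<Longrightarrow> V \<noteq> {}" using part by (auto simp: partition_on_def)
lemma pfin: "finite \<pi>" using finite_elements[OF _ part] by simp

lemma blk_eq: assumes "V \<in> \<pi>" "i \<in> V" shows "block_of \<pi> i = V"
  unfolding block_of_def
proof (rule the_equality)
  show "V \<in> \<pi> \<and> i \<in> V" using assms by simp
  fix W assume "W \<in> \<pi> \<and> i \<in> W"
  then show "W = V" using part_unique[OF part, of W V i] assms by simp
qed

lemma blk: "i \<in> {1..n} \<Longrightarrow> block_of \<pi> i \<in> \<pi> \<and> i \<in> block_of \<pi> i"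
proof -
  assume "i \<in> {1..n}"
  then have "i \<in> \<Union>\<pi>" using part by (auto simp: partition_on_def)
  then obtain V where "V \<in> \<pi>" "i \<in> V" by blast
  then show ?thesis using blk_eq by simp
qed

lemma MinMax: "V \<in> \<pi> \<Longrightarrow> Min V < Max V"
proof -
  assume V: "V \<in> \<pi>"
  have "Min V \<le> Max V" using Vfin[OF V] Vne[OF V] by simp
  moreover have "Min V \<noteq> Max V"
  proof
    assume eq: "Min V = Max V"
    have "V \<subseteq> {Min V}"
    proof
      fix x assume "x \<in> V"
      then have "Min V \<le> x" "x \<le> Max V" using Vfin[OF V] by auto
      then show "x \<in> {Min V}" using eq by simp
    qed
    then have "card V \<le> 1" using card_mono[of "{Min V}" V] by simp
    then show False using ns V by auto
  qed
  ultimately show ?thesis by simp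
qed

lemma mem_range: "V \<in> \<pi> \<Longrightarrow> x \<in> V \<Longrightarrow> Min V \<le> x \<and> x \<le> Max V"
  using Vfin by auto

lemma Min_in: "V \<in> \<pi> \<Longrightarrow> Min V \<in> V" using Vfin Vne by simp
lemma Max_in: "V \<in> \<pi> \<Longrightarrow> Max V \<in> V" using Vfin Vne by simp
lemma Min_ge1: "V \<in> \<pi> \<Longrightarrow> 1 \<le> Min V" using Min_in Vsub by fastforce
lemma Max_len: "V \<in> \<pi> \<Longrightarrow> Max V \<le> n" using Max_in Vsub by fastforce

lemma crossing:
  assumes "V \<in> \<pi>" "W \<in> \<pi>" "V \<noteq> W" "a < b" "b < c" "c < d" "a \<in> V" "c \<in> V" "b \<in> W" "d \<in> W"
  shows False
proof -
  have h0: "\<forall>V\<in>\<pi>. \<forall>W\<in>\<pi>. V \<noteq> W \<longrightarrow> \<not> (\<exists>a b c d. a < b \<and> b < c \<and> c < d \<and> a \<in> V \<and> c \<in> V \<and> b \<in> W \<and> d \<in> W)"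
    using nc unfolding noncrossing_def .
  have h: "\<not> (\<exists>a b c d. a < b \<and> b < c \<and> c < d \<and> a \<in> V \<and> c \<in> V \<and> b \<in> W \<and> d \<in> W)"
    by (rule mp[OF bspec[OF bspec[OF h0 assms(1)] assms(2)] assms(3)])
  show False
    apply (rule notE[OF h])
    apply (rule exI[of _ a], rule exI[of _ b], rule exI[of _ c], rule exI[of _ d])
    using assms(4-10) by simp
qed

lemma other_block: "V \<in> \<pi> \<Longrightarrow> W \<in> \<pi> \<Longrightarrow> i \<in> V \<Longrightarrow> W \<noteq> V \<Longrightarrow> i \<notin> W"
  using part_unique[OF part, of V W i] by auto

definition Oset :: "nat \<Rightarrow> nat set set" where "Oset j = {V\<in>\<pi>. Min V \<le> j \<and> j < Max V}"

lemma Oset_fin: "finite (Oset j)" using pfin by (simp add: Oset_def)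


lemma count: "j \<le> n \<Longrightarrow> g (tyl \<pi> n) j = int (card (Oset j))"
proof (induction j rule: inc_induct)
  case base
  have "Oset n = {}" using Max_len by (fastforce simp: Oset_def)
  then show ?case by (metis card.empty g_len of_nat_0 tyl_len)
next
  case (step j)
  let ?i = "Suc j"
  have i: "?i \<in> {1..n}" using step by auto
  define V where "V = block_of \<pi> ?i"
  have V: "V \<in> \<pi>" "?i \<in> V" using blk[OF i] by (auto simp: V_def)
  have oth: "W \<in> \<pi> \<Longrightarrow> W \<noteq> V \<Longrightarrow> (W \<in> Oset j \<longleftrightarrow> W \<in> Oset ?i)" for W
  proof -
    assume W: "W \<in> \<pi>" "W \<noteq> V"
    have "?i \<notin> W" using other_block[OF V(1) W(1) V(2) W(2)] .
    then have "Min W \<noteq> ?i" "Max W \<noteq> ?i" using Min_in[OF W(1)] Max_in[OF W(1)] by auto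
    then show ?thesis using W by (auto simp: Oset_def)
  qed
  have gs: "g (tyl \<pi> n) j = e (tyof \<pi> ?i) + g (tyl \<pi> n) ?i"
    using g_step[of j "tyl \<pi> n"] step tyl_nth[of j n \<pi>] by simp
  have mm: "Min V < Max V" using MinMax[OF V(1)] .
  have rg: "Min V \<le> ?i" "?i \<le> Max V" using mem_range[OF V] by auto
  have tyV: "tyof \<pi> ?i = (if ?i = Min V then TOp else if ?i = Max V then TCl else TMd)" by (simp add: tyof_def V_def)
  have diff: "Oset j - {V} = Oset ?i - {V}"
  proof (rule set_eqI)
    fix W
    show "W \<in> Oset j - {V} \<longleftrightarrow> W \<in> Oset ?i - {V}"
    proof (cases "W \<in> \<pi> \<and> W \<noteq> V")
      case True
      then show ?thesis using oth[of W] by blast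
    next
      case False
      then show ?thesis by (auto simp: Oset_def)
    qed
  qed
  show ?case
  proof (cases "?i = Min V")
    case True
    then have t: "tyof \<pi> ?i = TOp" using tyV by simp
    have Vi: "V \<in> Oset ?i" using V mm True by (simp add: Oset_def)
    have Vj: "V \<notin> Oset j" using True by (simp add: Oset_def)
    have "Oset ?i = insert V (Oset j)" using diff Vi Vj by blast
    then have "card (Oset ?i) = Suc (card (Oset j))" using Oset_fin Vj by simp
    then show ?thesis using gs t step.IH by simp
  next
    case False
    note nmin = False
    show ?thesis
    proof (cases "?i = Max V")
      case True
      then have t: "tyof \<pi> ?i = TCl" using nmin tyV by simp
      have Vi: "V \<notin> Oset ?i" using True by (simp add: Oset_def)
      have Vj: "V \<in> Oset j" using V True nmin rg by (simp add: Oset_def)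
      have "Oset j = insert V (Oset ?i)" using diff Vi Vj by blast
      then have "card (Oset j) = Suc (card (Oset ?i))" using Oset_fin Vi by simp
      then show ?thesis using gs t step.IH by simp
    next
      case False
      then have t: "tyof \<pi> ?i = TMd" using nmin tyV by simp
      have Vi: "V \<in> Oset ?i" using V False rg by (simp add: Oset_def)
      have Vj: "V \<in> Oset j" using V False nmin rg by (simp add: Oset_def)
      have "Oset j = Oset ?i" using diff Vi Vj by blast
      then show ?thesis using gs t step.IH by simp
    qed
  qed
qed

lemma tyl_valid: "Valid (tyl \<pi> n)"
proof -
  let ?ts = "tyl \<pi> n"
  have "okR ?ts 0"
    unfolding okR_nth
  proof (intro allI impI)
    fix j assume j: "j < length ?ts"
    let ?i = "Suc j"
    have i: "?i \<in> {1..n}" using j by auto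
    define V where "V = block_of \<pi> ?i"
    have V: "V \<in> \<pi>" "?i \<in> V" using blk[OF i] by (auto simp: V_def)
    have mm: "Min V < Max V" using MinMax[OF V(1)] .
    have rg: "Min V \<le> ?i" "?i \<le> Max V" using mem_range[OF V] by auto
    have tyV: "tyof \<pi> ?i = (if ?i = Min V then TOp else if ?i = Max V then TCl else TMd)" by (simp add: tyof_def V_def)
    have tj: "?ts ! j = tyof \<pi> ?i" using tyl_nth[of j n \<pi>] j by simp
    show "?ts ! j = TCl \<or> hR (drop (Suc j) ?ts) 0 \<ge> 1"
    proof (cases "?ts ! j = TCl")
      case False
      have "?i \<noteq> Max V"
      proof
        assume "?i = Max V"
        then have "?ts ! j = TCl" using tj tyV mm by simp
        then show False using False by simp
      qed
      then have "V \<in> Oset ?i" using V rg mm by (auto simp: Oset_def)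
      then have "card (Oset ?i) \<ge> 1" using Oset_fin by (metis One_nat_def Suc_leI card_gt_0_iff empty_iff)
      then show ?thesis using count[of ?i] j by (simp add: g_def)
    qed simp
  qed
  moreover have "Oset 0 = {}" using Min_ge1 by (fastforce simp: Oset_def)
  then have "hR ?ts 0 = 0" using count[of 0] by (simp add: g_def)
  ultimately show ?thesis by (simp add: Valid_def)
qed

lemma tyl_irr:
  assumes "\<exists>V\<in>\<pi>. 1 \<in> V \<and> n \<in> V"
  shows "Irr (tyl \<pi> n)"
proof -
  obtain V0 where V0: "V0 \<in> \<pi>" "1 \<in> V0" "n \<in> V0" using assms by blast
  have n1: "n \<ge> 1" using Vsub[OF V0(1)] V0(2) by auto
  have "g (tyl \<pi> n) j \<noteq> 0" if "0 < j" "j < n" for j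
  proof -
    have "V0 \<in> Oset j" using mem_range[OF V0(1) V0(2)] mem_range[OF V0(1) V0(3)] that by (auto simp: Oset_def V0(1))
    then have "card (Oset j) \<noteq> 0" using Oset_fin by auto
    then show ?thesis using count[of j] that by simp
  qed
  moreover have "tyl \<pi> n \<noteq> []"
  proof
    assume "tyl \<pi> n = []"
    then have "length (tyl \<pi> n) = 0" by simp
    then show False using n1 by simp
  qed
  ultimately show ?thesis using tyl_valid by (auto simp: Irr_def g_def)
qed

lemma opener_prop:
  assumes i: "i \<in> {1..n}"
  shows "isop (tyl \<pi> n) (Min (block_of \<pi> i)) i"
proof -
  let ?ts = "tyl \<pi> n"
  define V where "V = block_of \<pi> i"
  have V: "V \<in> \<pi>" "i \<in> V" using blk[OF i] by (auto simp: V_def)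
  define q where "q = Min V"
  have q: "q \<in> V" "1 \<le> q" "q \<le> i" using Min_in[OF V(1)] Min_ge1[OF V(1)] mem_range[OF V] by (auto simp: q_def)
  have bo: "block_of \<pi> q = V" using blk_eq[OF V(1) q(1)] .
  have on: "q \<le> n" using q i by auto
  have "tyof \<pi> q = TOp" unfolding tyof_def Let_def bo by (simp add: q_def)
  then have top: "?ts ! (q - 1) = TOp"
    using tyl_nth[of "q - 1" n \<pi>] q on by simp
  have sub: "Oset q \<subseteq> Oset m" if m: "q \<le> m" "m < i" for m
  proof
    fix W assume W: "W \<in> Oset q"
    then have W': "W \<in> \<pi>" "Min W \<le> q" "q < Max W" by (auto simp: Oset_def)
    show "W \<in> Oset m"
    proof (cases "W = V")
      case True
      then show ?thesis using W' m mem_range[OF V] by (auto simp: Oset_def)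
    next
      case False
      have "q \<notin> W" using other_block[OF V(1) W'(1) q(1) False] .
      then have "Min W < q" using W' Min_in[OF W'(1)] by (metis le_neq_implies_less)
      have "m < Max W"
      proof (rule ccontr)
        assume "\<not> m < Max W"
        then have "Max W < i" using m by simp
        then show False using crossing[OF W'(1) V(1) False \<open>Min W < q\<close> W'(3) _ Min_in[OF W'(1)] Max_in[OF W'(1)] q(1) V(2)] by simp
      qed
      then show ?thesis using W' m by (auto simp: Oset_def)
    qed
  qed
  have mono: "g ?ts m \<ge> g ?ts q" if "q \<le> m" "m < i" for m
    using count[of m] count[of q] sub[OF that] card_mono[OF Oset_fin] that on i by simp
  have last: "q = i \<or> (?ts ! (i - 1) \<noteq> TOp \<and> g ?ts (i - 1) = g ?ts q)"
  proof (cases "q = i")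
    case False
    then have oi: "q < i" using q by simp
    have "i - 1 < n" using i by auto
    from tyl_nth[OF this, of \<pi>] have "?ts ! (i - 1) = tyof \<pi> (Suc (i - 1))" .
    then have "?ts ! (i - 1) = tyof \<pi> i" using i by simp
    moreover have "tyof \<pi> i = (if i = Min V then TOp else if i = Max V then TCl else TMd)" by (simp add: tyof_def V_def)
    ultimately have nt: "?ts ! (i - 1) \<noteq> TOp" using False by (simp add: q_def)
    have "Oset (i - 1) \<subseteq> Oset q"
    proof
      fix W assume W: "W \<in> Oset (i - 1)"
      then have W': "W \<in> \<pi>" "Min W \<le> i - 1" "i - 1 < Max W" by (auto simp: Oset_def)
      show "W \<in> Oset q"
      proof (cases "W = V")
        case True
        then show ?thesis using W' oi mem_range[OF V] V by (auto simp: Oset_def q_def)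
      next
        case False
        have "i \<notin> W" using other_block[OF V(1) W'(1) V(2) False] .
        then have "Max W \<noteq> i" using Max_in[OF W'(1)] by auto
        then have mx: "i < Max W" using W' by auto
        have "q \<notin> W" using other_block[OF V(1) W'(1) q(1) False] .
        then have "Min W \<noteq> q" using Min_in[OF W'(1)] by auto
        have "Min W < q"
        proof (rule ccontr)
          assume "\<not> Min W < q"
          then have "q < Min W" using \<open>Min W \<noteq> q\<close> by simp
          moreover have "Min W < i" using W' oi by simp
          ultimately show False using crossing[OF V(1) W'(1) False[symmetric] _ _ mx q(1) V(2) Min_in[OF W'(1)] Max_in[OF W'(1)]] by simp
        qed
        then show ?thesis using W' mx oi by (auto simp: Oset_def)
      qed
    qed
    moreover have "Oset q \<subseteq> Oset (i - 1)" using sub[of "i - 1"] oi by simp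
    ultimately have "Oset (i - 1) = Oset q" by simp
    moreover have "i - 1 \<le> n" using i by auto
    ultimately have "g ?ts (i - 1) = g ?ts q" using count[of "i - 1"] count[of q] on by simp
    then show ?thesis using nt by simp
  qed simp
  show ?thesis unfolding isop_def
    using q top mono last i by (simp add: q_def V_def[symmetric])
qed

lemma Min_opener: "i \<in> {1..n} \<Longrightarrow> Min (block_of \<pi> i) = opener (tyl \<pi> n) i"
  using opener_eq[OF opener_prop] by simp

lemma pi_dec: "\<pi> = dec n (tyl \<pi> n)"
proof -
  have bl: "block_of \<pi> i = {k\<in>{1..n}. opener (tyl \<pi> n) k = opener (tyl \<pi> n) i}" if i: "i \<in> {1..n}" for i
  proof -
    have "k \<in> block_of \<pi> i \<longleftrightarrow> k \<in> {1..n} \<and> Min (block_of \<pi> k) = Min (block_of \<pi> i)" for k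
    proof
      assume k: "k \<in> block_of \<pi> i"
      then have "k \<in> {1..n}" using Vsub blk[OF i] by blast
      then show "k \<in> {1..n} \<and> Min (block_of \<pi> k) = Min (block_of \<pi> i)"
        using blk_eq[of "block_of \<pi> i" k] blk[OF i] k by simp
    next
      assume k: "k \<in> {1..n} \<and> Min (block_of \<pi> k) = Min (block_of \<pi> i)"
      have Vk: "block_of \<pi> k \<in> \<pi>" using blk[of k] k by simp
      have Vi: "block_of \<pi> i \<in> \<pi>" using blk[OF i] by simp
      have m1: "Min (block_of \<pi> k) \<in> block_of \<pi> k" using Min_in[OF Vk] .
      have m2: "Min (block_of \<pi> k) \<in> block_of \<pi> i" using k Min_in[OF Vi] by simp
      have "block_of \<pi> k = block_of \<pi> i" using part_unique[OF part Vk Vi m1 m2] .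
      then show "k \<in> block_of \<pi> i" using blk[of k] k by simp
    qed
    then show ?thesis using Min_opener i by auto
  qed
  have "\<pi> = (\<lambda>i. block_of \<pi> i) ` {1..n}"
  proof
    show "\<pi> \<subseteq> (\<lambda>i. block_of \<pi> i) ` {1..n}"
    proof
      fix V assume V: "V \<in> \<pi>"
      then obtain x where "x \<in> V" using Vne by blast
      then show "V \<in> (\<lambda>i. block_of \<pi> i) ` {1..n}" using blk_eq[OF V] Vsub[OF V] by (intro image_eqI[of _ _ x]) auto
    qed
    show "(\<lambda>i. block_of \<pi> i) ` {1..n} \<subseteq> \<pi>" using blk by auto
  qed
  also have "\<dots> = dec n (tyl \<pi> n)" unfolding dec_def by (rule image_cong[OF refl]) (rule bl)
  finally show ?thesis .
qed

end


locale irrw =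
  fixes ts :: "ty list" and n :: nat
  assumes irr: "Irr ts" and len: "length ts = n"
begin

lemma valid: "Valid ts" using irr by (simp add: Irr_def)
lemma g0: "g ts 0 = 0" using valid by (simp add: Valid_def g_def)
lemma gnn: "g ts j \<ge> 0" using valid_g_nonneg[OF valid] .
lemma gpos: "0 < j \<Longrightarrow> j < n \<Longrightarrow> g ts j \<ge> 1"
  using irr gnn[of j] len by (fastforce simp: Irr_def g_def)
lemma gmd: "j < n \<Longrightarrow> ts ! j \<noteq> TCl \<Longrightarrow> g ts (Suc j) \<ge> 1"
  using valid_g_md[OF valid] len by simp
lemma gp: "1 \<le> q \<Longrightarrow> q \<le> n \<Longrightarrow> g ts (q - 1) = e (ts ! (q - 1)) + g ts q"
  using g_pred[of q ts] len by simp
lemma gn: "g ts n = 0" using g_len[of ts] len by simp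

lemma n2: "n \<ge> 2"
proof (rule ccontr)
  assume "\<not> n \<ge> 2"
  moreover have "n \<noteq> 0" using irr len by (auto simp: Irr_def)
  ultimately have n1: "n = 1" by simp
  have "g ts 0 = e (ts ! 0) + g ts 1" using gp[of 1] n1 by simp
  then have "e (ts ! 0) = 0" using g0 gn n1 by simp
  then have "ts ! 0 = TMd" using e_cases[of "ts ! 0"] by auto
  then have "g ts 1 \<ge> 1" using gmd[of 0] n1 by simp
  then show False using gn n1 by simp
qed

lemma first: "ts ! 0 = TOp" "g ts 1 = 1"
proof -
  have "g ts 0 = e (ts ! 0) + g ts 1" using gp[of 1] n2 by simp
  moreover have "g ts 1 \<ge> 1" using gpos[of 1] n2 by simp
  ultimately show "ts ! 0 = TOp" "g ts 1 = 1" using g0 e_cases[of "ts ! 0"] by auto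
qed

lemma lastc: "ts ! (n - 1) = TCl" "g ts (n - 1) = 1"
proof -
  have "g ts (n - 1) = e (ts ! (n - 1)) + g ts n" using gp[of n] n2 by simp
  moreover have "g ts (n - 1) \<ge> 1" using gpos[of "n - 1"] n2 by simp
  ultimately show "ts ! (n - 1) = TCl" "g ts (n - 1) = 1" using gn e_cases[of "ts ! (n - 1)"] by auto
qed

lemma isop_self: "isop ts q i \<Longrightarrow> isop ts q q"
  by (auto simp: isop_def)

lemma op_idem: "isop ts q i \<Longrightarrow> opener ts q = q"
  using opener_eq isop_self by blast

lemma ex_op:
  assumes i: "i \<in> {1..n}"
  shows "\<exists>q. isop ts q i"
proof (cases "ts ! (i - 1) = TOp")
  case True
  then have "isop ts i i" using i len by (auto simp: isop_def)
  then show ?thesis by blast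
next
  case False
  define lam where "lam = g ts (i - 1)"
  have gi: "g ts (i - 1) = e (ts ! (i - 1)) + g ts i" using gp[of i] i by simp
  have lam1: "lam \<ge> 1"
  proof (cases "ts ! (i - 1) = TCl")
    case True
    then show ?thesis using gi gnn[of i] by (simp add: lam_def)
  next
    case False
    then have "ts ! (i - 1) = TMd" using \<open>ts ! (i - 1) \<noteq> TOp\<close> by (cases "ts ! (i - 1)") auto
    moreover have "g ts i \<ge> 1"
    proof -
      have "i - 1 < n" using i by auto
      from gmd[OF this] False have "g ts (Suc (i - 1)) \<ge> 1" by simp
      then show ?thesis using i by simp
    qed
    ultimately show ?thesis using gi by (simp add: lam_def)
  qed
  define M where "M = {m. m \<le> i - 1 \<and> g ts m < lam}"
  have finM: "finite M" by (simp add: M_def)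
  have "0 \<in> M" using g0 lam1 by (simp add: M_def)
  then have neM: "M \<noteq> {}" by blast
  define m0 where "m0 = Max M"
  have m0M: "m0 \<in> M" using Max_in[OF finM neM] by (simp add: m0_def)
  have m0max: "m \<in> M \<Longrightarrow> m \<le> m0" for m using Max_ge[OF finM] by (simp add: m0_def)
  have "m0 \<noteq> i - 1" using m0M by (auto simp: M_def lam_def)
  then have m0lt: "m0 < i - 1" using m0M by (simp add: M_def)
  define q where "q = Suc m0"
  have ge: "g ts m \<ge> lam" if "q \<le> m" "m < i" for m
  proof (rule ccontr)
    assume "\<not> g ts m \<ge> lam"
    then have "m \<in> M" using that by (simp add: M_def)
    then have "m \<le> m0" by (rule m0max)
    then show False using that by (simp add: q_def)
  qed
  have "m0 < length ts" using m0lt i len by auto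
  from g_step[OF this] have gm0: "g ts m0 = e (ts ! m0) + g ts q" by (simp add: q_def)
  have gq: "g ts q \<ge> lam" using ge[of q] m0lt by (simp add: q_def)
  have "g ts m0 < lam" using m0M by (simp add: M_def)
  then have op: "ts ! m0 = TOp" and gql: "g ts q = lam"
    using gm0 gq e_cases[of "ts ! m0"] by auto
  have "isop ts q i"
    unfolding isop_def using op gql ge m0lt i len False by (auto simp: q_def lam_def)
  then show ?thesis by blast
qed

lemma op_prop: "i \<in> {1..n} \<Longrightarrow> isop ts (opener ts i) i"
proof -
  assume "i \<in> {1..n}"
  then obtain q where "isop ts q i" using ex_op by blast
  then show ?thesis using opener_eq[of ts q i] by simp
qed

lemma closer:
  assumes q: "1 \<le> q" "q \<le> n" "ts ! (q - 1) = TOp"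
  shows "\<exists>k. q < k \<and> k \<le> n \<and> ts ! (k - 1) = TCl \<and> isop ts q k \<and> (\<forall>k'. isop ts q k' \<longrightarrow> k' \<le> k)"
proof -
  define lam where "lam = g ts q"
  have "g ts (q - 1) = -1 + g ts q" using gp[OF q(1,2)] q(3) by simp
  then have lam1: "lam \<ge> 1" using gnn[of "q - 1"] by (simp add: lam_def)
  have "q \<noteq> n" using lam1 gn by (auto simp: lam_def)
  then have qn: "q < n" using q by simp
  define K where "K = {k. q < k \<and> k \<le> n \<and> g ts k < lam}"
  have finK: "finite K" by (simp add: K_def)
  have "n \<in> K" using qn gn lam1 by (simp add: K_def)
  then have neK: "K \<noteq> {}" by blast
  define k where "k = Min K"
  have kK: "k \<in> K" using Min_in[OF finK neK] by (simp add: k_def)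
  have kmin: "m \<in> K \<Longrightarrow> k \<le> m" for m using Min_le[OF finK] by (simp add: k_def)
  have k: "q < k" "k \<le> n" "g ts k < lam" using kK by (auto simp: K_def)
  have ge: "g ts m \<ge> lam" if "q \<le> m" "m < k" for m
  proof (cases "m = q")
    case True
    then show ?thesis by (simp add: lam_def)
  next
    case False
    show ?thesis
    proof (rule ccontr)
      assume "\<not> g ts m \<ge> lam"
      then have "m \<in> K" using that False k by (simp add: K_def)
      then show False using kmin that by fastforce
    qed
  qed
  have gk: "g ts (k - 1) = e (ts ! (k - 1)) + g ts k" using gp[of k] k by simp
  have "g ts (k - 1) \<ge> lam" using ge[of "k - 1"] k by simp
  then have cl: "ts ! (k - 1) = TCl" and gkl: "g ts (k - 1) = lam"
    using gk k(3) e_cases[of "ts ! (k - 1)"] by auto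
  have iq: "isop ts q k"
    unfolding isop_def using q k cl gkl ge len by (auto simp: lam_def)
  have mx: "k' \<le> k" if "isop ts q k'" for k'
  proof (rule ccontr)
    assume "\<not> k' \<le> k"
    then have "g ts k \<ge> g ts q" using that k unfolding isop_def by auto
    then show False using k(3) by (simp add: lam_def)
  qed
  show ?thesis using k cl iq mx by blast
qed

definition C :: "nat \<Rightarrow> nat set" where "C i = {k\<in>{1..n}. opener ts k = opener ts i}"

lemma memC: "i \<in> {1..n} \<Longrightarrow> k \<in> C i \<longleftrightarrow> (k \<in> {1..n} \<and> isop ts (opener ts i) k)"
proof
  assume k: "k \<in> C i"
  then have "k \<in> {1..n}" "opener ts k = opener ts i" by (auto simp: C_def)
  then show "k \<in> {1..n} \<and> isop ts (opener ts i) k" using op_prop[of k] by simp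
next
  assume "k \<in> {1..n} \<and> isop ts (opener ts i) k"
  then show "k \<in> C i" using opener_eq[of ts "opener ts i" k] by (simp add: C_def)
qed

lemma dec_C: "dec n ts = C ` {1..n}" by (simp add: dec_def C_def)

lemma C_sub: "C i \<subseteq> {1..n}" by (auto simp: C_def)
lemma C_self: "i \<in> {1..n} \<Longrightarrow> i \<in> C i" by (simp add: C_def)
lemma C_eq: "k \<in> C i \<Longrightarrow> C k = C i" by (auto simp: C_def)

lemma dec_part: "partition_on {1..n} (dec n ts)"
proof (rule partition_onI)
  show "\<Union> (dec n ts) = {1..n}" using C_sub C_self by (auto simp: dec_C)
  show "{} \<notin> dec n ts" unfolding dec_C
  proof
    assume "{} \<in> C ` {1..n}"
    then obtain x where "x \<in> {1..n}" "{} = C x" by blast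
    then show False using C_self[of x] by simp
  qed
  fix p q assume "p \<in> dec n ts" "q \<in> dec n ts" "p \<noteq> q"
  then show "disjnt p q" unfolding dec_C disjnt_def using C_eq by blast
qed

lemma blockC: "i \<in> {1..n} \<Longrightarrow> block_of (dec n ts) i = C i"
  unfolding block_of_def
proof (rule the_equality)
  assume i: "i \<in> {1..n}"
  show "C i \<in> dec n ts \<and> i \<in> C i" using i C_self by (simp add: dec_C)
  fix V assume "V \<in> dec n ts \<and> i \<in> V"
  then obtain x where "V = C x" "i \<in> C x" by (auto simp: dec_C)
  then show "V = C i" using C_eq by simp
qed

lemma MinC: "i \<in> {1..n} \<Longrightarrow> Min (C i) = opener ts i"
proof -
  assume i: "i \<in> {1..n}"
  let ?q = "opener ts i"
  have iq: "isop ts ?q i" using op_prop[OF i] .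
  have "?q \<in> C i" using memC[OF i] op_idem[OF iq] iq isop_self[OF iq] i
    by (auto simp: isop_def)
  moreover have "\<forall>k\<in>C i. ?q \<le> k" using memC[OF i] by (auto simp: isop_def)
  moreover have "finite (C i)" using C_sub finite_subset by blast
  ultimately show ?thesis by (intro Min_eqI) auto
qed

lemma MaxC: "i \<in> {1..n} \<Longrightarrow> \<exists>k. Max (C i) = k \<and> ts ! (k - 1) = TCl \<and> opener ts i < k"
proof -
  assume i: "i \<in> {1..n}"
  let ?q = "opener ts i"
  have iq: "isop ts ?q i" using op_prop[OF i] .
  then have q: "1 \<le> ?q" "?q \<le> n" "ts ! (?q - 1) = TOp" using i by (auto simp: isop_def)
  obtain k where k: "?q < k" "k \<le> n" "ts ! (k - 1) = TCl" "isop ts ?q k" "\<forall>k'. isop ts ?q k' \<longrightarrow> k' \<le> k"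
    using closer[OF q] by blast
  have "k \<in> C i" using memC[OF i] k q by simp
  moreover have "\<forall>k'\<in>C i. k' \<le> k" using memC[OF i] k(5) by auto
  moreover have "finite (C i)" using C_sub finite_subset by blast
  ultimately have "Max (C i) = k" by (intro Max_eqI) auto
  then show ?thesis using k by blast
qed

lemma C_card: "i \<in> {1..n} \<Longrightarrow> card (C i) \<ge> 2"
proof -
  assume i: "i \<in> {1..n}"
  have fin: "finite (C i)" using C_sub finite_subset by blast
  have ne: "C i \<noteq> {}" using C_self[OF i] by blast
  obtain k where k: "Max (C i) = k" "opener ts i < k" using MaxC[OF i] by blast
  have "Min (C i) < Max (C i)" using MinC[OF i] k by simp
  then have sub: "{Min (C i), Max (C i)} \<subseteq> C i" and neq: "Min (C i) \<noteq> Max (C i)" using fin ne by auto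
  have "card {Min (C i), Max (C i)} = 2" using neq by simp
  then show ?thesis using card_mono[OF fin sub] by simp
qed

lemma dec_nc: "noncrossing (dec n ts)"
  unfolding noncrossing_def
proof (intro ballI impI notI)
  fix V W assume V: "V \<in> dec n ts" and W: "W \<in> dec n ts" and VW: "V \<noteq> W"
  assume "\<exists>a b c d. a < b \<and> b < c \<and> c < d \<and> a \<in> V \<and> c \<in> V \<and> b \<in> W \<and> d \<in> W"
  then obtain a b c d where abcd: "a < b" "b < c" "c < d" "a \<in> V" "c \<in> V" "b \<in> W" "d \<in> W" by blast
  obtain x where x: "x \<in> {1..n}" "V = C x" using V by (auto simp: dec_C)
  obtain y where y: "y \<in> {1..n}" "W = C y" using W by (auto simp: dec_C)
  let ?o = "opener ts x" and ?p = "opener ts y"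
  have ia: "isop ts ?o a" "a \<in> {1..n}" using memC[OF x(1)] abcd x by auto
  have ic: "isop ts ?o c" "c \<in> {1..n}" using memC[OF x(1)] abcd x by auto
  have ib: "isop ts ?p b" "b \<in> {1..n}" using memC[OF y(1)] abcd y by auto
  have id: "isop ts ?p d" "d \<in> {1..n}" using memC[OF y(1)] abcd y by auto
  have "?o \<noteq> ?p" using x y VW by (auto simp: C_def)
  have oa: "?o \<le> a" "1 \<le> ?o" "ts ! (?o - 1) = TOp" using ia(1) by (auto simp: isop_def)
  have pb: "?p \<le> b" "1 \<le> ?p" "ts ! (?p - 1) = TOp" using ib(1) by (auto simp: isop_def)
  have on: "?o \<le> n" "?p \<le> n" using oa pb ia ib by auto
  have c_mono: "\<forall>m. ?o \<le> m \<and> m < c \<longrightarrow> g ts m \<ge> g ts ?o" "g ts (c - 1) = g ts ?o"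
    using ic(1) oa abcd by (auto simp: isop_def)
  have d_mono: "\<forall>m. ?p \<le> m \<and> m < d \<longrightarrow> g ts m \<ge> g ts ?p"
    using id(1) by (auto simp: isop_def)
  show False
  proof (cases "?p < ?o")
    case True
    have "g ts (b - 1) = g ts ?p" using ib(1) True oa abcd by (auto simp: isop_def)
    moreover have "?o \<le> b - 1 \<and> b - 1 < c" using oa abcd by auto
    then have "g ts (b - 1) \<ge> g ts ?o" using c_mono(1) by blast
    moreover have "?p \<le> ?o - 1 \<and> ?o - 1 < d" using True abcd oa by auto
    then have "g ts (?o - 1) \<ge> g ts ?p" using d_mono by blast
    moreover have "g ts (?o - 1) = -1 + g ts ?o" using gp[OF oa(2) on(1)] oa(3) by simp
    ultimately show False by simp
  next
    case False
    then have op: "?o < ?p" using \<open>?o \<noteq> ?p\<close> by simp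
    have "?o \<le> ?p - 1 \<and> ?p - 1 < c" using op pb abcd by auto
    then have "g ts (?p - 1) \<ge> g ts ?o" using c_mono(1) by blast
    moreover have "g ts (?p - 1) = -1 + g ts ?p" using gp[OF pb(2) on(2)] pb(3) by simp
    moreover have "?p \<le> c - 1 \<and> c - 1 < d" using pb abcd by auto
    then have "g ts (c - 1) \<ge> g ts ?p" using d_mono by blast
    ultimately show False using c_mono(2) by simp
  qed
qed

lemma one_n: "\<exists>V\<in>dec n ts. 1 \<in> V \<and> n \<in> V"
proof -
  have i1: "isop ts 1 n"
    unfolding isop_def using first lastc n2 gpos len by auto
  have "opener ts 1 = 1" using op_idem[OF i1] .
  moreover have "opener ts n = 1" using opener_eq[OF i1] .
  ultimately have "n \<in> C 1" "1 \<in> C 1" using n2 by (auto simp: C_def)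
  then show ?thesis using n2 by (auto simp: dec_C)
qed

lemma dec_NC: "dec n ts \<in> NC_ns_tilde n"
  using dec_part dec_nc one_n C_card by (auto simp: NC_ns_tilde_def dec_C)

lemma tyl_dec: "tyl (dec n ts) n = ts"
proof (rule nth_equalityI)
  show "length (tyl (dec n ts) n) = length ts" using len by simp
  fix j assume "j < length (tyl (dec n ts) n)"
  then have j: "j < n" by simp
  let ?i = "Suc j"
  have i: "?i \<in> {1..n}" using j by simp
  have t: "tyl (dec n ts) n ! j = (if ?i = Min (C ?i) then TOp else if ?i = Max (C ?i) then TCl else TMd)"
    using tyl_nth[OF j] blockC[OF i] by (simp add: tyof_def)
  let ?q = "opener ts ?i"
  have iq: "isop ts ?q ?i" using op_prop[OF i] .
  have mn: "Min (C ?i) = ?q" using MinC[OF i] .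
  show "tyl (dec n ts) n ! j = ts ! j"
  proof (cases "ts ! j")
    case TOp
    then have "isop ts ?i ?i" using i len by (auto simp: isop_def)
    then have "?q = ?i" using opener_eq by blast
    then show ?thesis using t mn TOp by simp
  next
    case TCl
    have qi: "?q \<noteq> ?i" using iq TCl by (auto simp: isop_def)
    then have g1: "g ts j = g ts ?q" using iq by (auto simp: isop_def)
    have "g ts j = e (ts ! j) + g ts ?i" using g_step[of j ts] j len by simp
    then have gi: "g ts ?i = g ts ?q - 1" using g1 TCl by simp
    have fin: "finite (C ?i)" using C_sub finite_subset by blast
    have "\<forall>k\<in>C ?i. k \<le> ?i"
    proof
      fix k assume k: "k \<in> C ?i"
      show "k \<le> ?i"
      proof (rule ccontr)
        assume "\<not> k \<le> ?i"
        moreover have "isop ts ?q k" using memC[OF i] k by simp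
        ultimately have "g ts ?i \<ge> g ts ?q" using iq unfolding isop_def by auto
        then show False using gi by simp
      qed
    qed
    then have "Max (C ?i) = ?i" using C_self[OF i] fin by (intro Max_eqI) auto
    then show ?thesis using t mn qi TCl by simp
  next
    case TMd
    have qi: "?q \<noteq> ?i" using iq TMd by (auto simp: isop_def)
    obtain k where k: "Max (C ?i) = k" "ts ! (k - 1) = TCl" using MaxC[OF i] by blast
    have "k \<noteq> ?i" using k TMd by auto
    then show ?thesis using t mn qi TMd k by simp
  qed
qed

end

lemma NC_ncp: "\<pi> \<in> NC_ns_tilde n \<Longrightarrow> ncp n \<pi>"
  by (simp add: NC_ns_tilde_def ncp_def)

lemma bij_tyl: "bij_betw (\<lambda>\<pi>. tyl \<pi> n) (NC_ns_tilde n) (Is n)"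
proof (rule bij_betw_imageI)
  show "inj_on (\<lambda>\<pi>. tyl \<pi> n) (NC_ns_tilde n)"
  proof (rule inj_onI)
    fix \<pi> \<pi>' assume a: "\<pi> \<in> NC_ns_tilde n" "\<pi>' \<in> NC_ns_tilde n" "tyl \<pi> n = tyl \<pi>' n"
    have "\<pi> = dec n (tyl \<pi> n)" using ncp.pi_dec[OF NC_ncp[OF a(1)]] .
    also have "\<dots> = dec n (tyl \<pi>' n)" using a(3) by simp
    also have "\<dots> = \<pi>'" using ncp.pi_dec[OF NC_ncp[OF a(2)]] by simp
    finally show "\<pi> = \<pi>'" .
  qed
  show "(\<lambda>\<pi>. tyl \<pi> n) ` NC_ns_tilde n = Is n"
  proof
    show "(\<lambda>\<pi>. tyl \<pi> n) ` NC_ns_tilde n \<subseteq> Is n"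
    proof
      fix x assume "x \<in> (\<lambda>\<pi>. tyl \<pi> n) ` NC_ns_tilde n"
      then obtain \<pi> where p: "\<pi> \<in> NC_ns_tilde n" "x = tyl \<pi> n" by blast
      have "Irr (tyl \<pi> n)" using ncp.tyl_irr[OF NC_ncp[OF p(1)]] p(1) by (simp add: NC_ns_tilde_def)
      then show "x \<in> Is n" using p by (simp add: Is_def)
    qed
    show "Is n \<subseteq> (\<lambda>\<pi>. tyl \<pi> n) ` NC_ns_tilde n"
    proof
      fix ts assume "ts \<in> Is n"
      then have w: "irrw ts n" by (simp add: Is_def irrw_def)
      show "ts \<in> (\<lambda>\<pi>. tyl \<pi> n) ` NC_ns_tilde n"
        using irrw.dec_NC[OF w] irrw.tyl_dec[OF w] by (intro image_eqI[of _ _ "dec n ts"]) auto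
    qed
  qed
qed


lemma ops_nth: "length ts = length us \<Longrightarrow> length (ops sc phi gam L ts us) = length us \<and>
   (\<forall>j<length us. ops sc phi gam L ts us ! j = opof sc phi gam L (ts ! j) (us ! j))"
proof (induction ts arbitrary: us)
  case Nil
  then show ?case by simp
next
  case (Cons t ts)
  then obtain u us' where us: "us = u # us'" "length ts = length us'" by (cases us) auto
  show ?case using Cons.IH[OF us(2)] us by (auto simp: nth_Cons split: nat.split)
qed

lemma W_M_ops: "W_M sc gam phi L \<pi> us = ops sc phi gam L (tyl \<pi> (length us)) us"
proof -
  have l: "length (tyl \<pi> (length us)) = length us" by simp
  note o = ops_nth[OF l, of sc phi gam L]
  show ?thesis
  proof (rule nth_equalityI)
    show "length (W_M sc gam phi L \<pi> us) = length (ops sc phi gam L (tyl \<pi> (length us)) us)"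
      using o by (simp add: W_M_def del: upt_Suc)
    fix j assume "j < length (W_M sc gam phi L \<pi> us)"
    then have j: "j < length us" by (simp add: W_M_def del: upt_Suc)
    have w: "W_M sc gam phi L \<pi> us ! j = (let V = block_of \<pi> (Suc j) in
      if Suc j = Min V then a_minus sc gam phi (us ! j)
      else if Suc j = Max V then a_plus (us ! j)
      else a_zero L (us ! j))"
    proof -
      have u: "[1..<length us + 1] ! j = Suc j" using j by (simp del: upt_Suc)
      have w0: "W_M sc gam phi L \<pi> us ! j = (\<lambda>i. let V = block_of \<pi> i in if i = Min V then a_minus sc gam phi (us ! (i - 1))
        else if i = Max V then a_plus (us ! (i - 1)) else a_zero L (us ! (i - 1))) ([1..<length us + 1] ! j)"
        unfolding W_M_def by (rule nth_map) (simp add: j del: upt_Suc)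
      then show ?thesis unfolding u by (simp add: Let_def)
    qed
    have "ops sc phi gam L (tyl \<pi> (length us)) us ! j = opof sc phi gam L (tyof \<pi> (Suc j)) (us ! j)"
      using o j tyl_nth[OF j] by simp
    then show "W_M sc gam phi L \<pi> us ! j = ops sc phi gam L (tyl \<pi> (length us)) us ! j"
      using w by (simp add: tyof_def Let_def)
  qed
qed

lemma psi_nil: "vacuum_state sc st gam phi [] = 1"
  by (simp add: vacuum_state_def fock_ip_def vac_def)

lemma Vs0: "Vs 0 = {[]}" by (auto simp: Vs_def Valid_def)

lemma val_nil: "val sc st phi gam L [] [] = 1"
  by (simp add: val_def psi_nil)

lemma main_ind:
  assumes bc: "is_boolean_cumulants (vacuum_state sc st gam phi) B"
  shows "us \<noteq> [] \<Longrightarrow> B (map (Xop sc gam phi L) us) = (\<Sum>ts\<in>Is (length us). val sc st phi gam L ts us)"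
proof (induction "length us" arbitrary: us rule: less_induct)
  case less
  let ?X = "Xop sc gam phi L"
  let ?psi = "vacuum_state sc st gam phi"
  let ?I = "\<lambda>us. (\<Sum>ts\<in>Is (length us). val sc st phi gam L ts us)"
  let ?V = "\<lambda>us. (\<Sum>ts\<in>Vs (length us). val sc st phi gam L ts us)"
  define n where "n = length us"
  have n1: "n \<ge> 1" using less.prems by (simp add: n_def Suc_le_eq)
  have r1: "?psi (map ?X us) = (\<Sum>k\<in>{1..n}. B (map ?X (take k us)) * ?V (drop k us))"
    using bool_rec[OF bc psi_nil, of "map ?X us"] less.prems
    by (simp add: n_def take_map drop_map psi_Xs_Valid)
  have r2: "?psi (map ?X us) = (\<Sum>k\<in>{1..n}. ?I (take k us) * ?V (drop k us))"
  proof -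
    have "?psi (map ?X us) = ?V us" by (rule psi_Xs_Valid)
    also have "\<dots> = (\<Sum>k\<in>{1..n}. (\<Sum>t1\<in>Is k. val sc st phi gam L t1 (take k us)) * ?V (drop k us))"
      using sum_Valid[of us n sc st phi gam L] n1 by (simp add: n_def)
    also have "\<dots> = (\<Sum>k\<in>{1..n}. ?I (take k us) * ?V (drop k us))"
      by (rule sum.cong[OF refl]) (auto simp: n_def min_def)
    finally show ?thesis .
  qed
  have eqk: "B (map ?X (take k us)) = ?I (take k us)" if "k \<in> {1..<n}" for k
    using less.hyps[of "take k us"] that less.prems by (simp add: n_def)
  have split: "{1..n} = insert n {1..<n}" using n1 by auto
  have "(\<Sum>k\<in>{1..n}. B (map ?X (take k us)) * ?V (drop k us)) =
        B (map ?X us) * ?V [] + (\<Sum>k\<in>{1..<n}. B (map ?X (take k us)) * ?V (drop k us))"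
    unfolding split by (simp add: n_def)
  moreover have "(\<Sum>k\<in>{1..n}. ?I (take k us) * ?V (drop k us)) =
        ?I us * ?V [] + (\<Sum>k\<in>{1..<n}. ?I (take k us) * ?V (drop k us))"
    unfolding split by (simp add: n_def)
  moreover have "(\<Sum>k\<in>{1..<n}. B (map ?X (take k us)) * ?V (drop k us)) = (\<Sum>k\<in>{1..<n}. ?I (take k us) * ?V (drop k us))"
    using eqk by simp
  moreover have "?V [] = 1" by (simp add: Vs0 val_nil)
  ultimately show ?case using r1 r2 by simp
qed

theorem lemma3p4:
  fixes sc :: "complex \<Rightarrow> 'b::ring_1 \<Rightarrow> 'b" and st :: "'b \<Rightarrow> 'b"
    and phi :: "'b \<Rightarrow> complex" and gam :: "'b \<Rightarrow> 'b" and L :: "'b \<Rightarrow> 'b \<Rightarrow> 'b"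
    and B :: "'b fop list \<Rightarrow> complex" and us :: "'b list"
  assumes "star_algebra sc st"
    and "star_linear_functional sc st phi"
    and "star_linear_map sc st gam"
    and "star_bilinear_map sc st L"
    and "positive_functional st phi" and "faithful_functional st phi"
    and "completely_positive st (gp sc gam phi)"
    and "\<forall>b u v. phi (st v * L b u) = phi (st (L (st b) v) * u)"
    and "\<forall>b u v. gam (st v * L b u) = gam (st (L (st b) v) * u)"
    and "is_boolean_cumulants (vacuum_state sc st gam phi) B"
  shows "(length us \<ge> 2 \<longrightarrow>
            B (map (Xop sc gam phi L) us) =
              (\<Sum>\<pi>\<in>NC_ns_tilde (length us). vacuum_state sc st gam phi (W_M sc gam phi L \<pi> us)))
         \<and> (\<forall>u. B [Xop sc gam phi L u] = 0)"
proof
  note bc = assms(10)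
  show "length us \<ge> 2 \<longrightarrow>
            B (map (Xop sc gam phi L) us) =
              (\<Sum>\<pi>\<in>NC_ns_tilde (length us). vacuum_state sc st gam phi (W_M sc gam phi L \<pi> us))"
  proof
    assume "length us \<ge> 2"
    then have ne: "us \<noteq> []" by auto
    have "B (map (Xop sc gam phi L) us) = (\<Sum>ts\<in>Is (length us). val sc st phi gam L ts us)"
      using main_ind[OF bc ne] .
    also have "\<dots> = (\<Sum>\<pi>\<in>NC_ns_tilde (length us). val sc st phi gam L (tyl \<pi> (length us)) us)"
      using sum.reindex_bij_betw[OF bij_tyl[of "length us"], of "\<lambda>ts. val sc st phi gam L ts us"] by simp
    also have "\<dots> = (\<Sum>\<pi>\<in>NC_ns_tilde (length us). vacuum_state sc st gam phi (W_M sc gam phi L \<pi> us))"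
      by (simp add: val_def W_M_ops)
    finally show "B (map (Xop sc gam phi L) us) =
              (\<Sum>\<pi>\<in>NC_ns_tilde (length us). vacuum_state sc st gam phi (W_M sc gam phi L \<pi> us))" .
  qed
  show "\<forall>u. B [Xop sc gam phi L u] = 0"
  proof
    fix u
    have "Is 1 = {}"
    proof (rule ccontr)
      assume "Is 1 \<noteq> {}"
      then obtain ts where "ts \<in> Is 1" by blast
      then have "irrw ts 1" by (simp add: Is_def irrw_def)
      then show False using irrw.n2 by fastforce
    qed
    then show "B [Xop sc gam phi L u] = 0" using main_ind[OF bc, of "[u]"] by simp
  qed
qed


end
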